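(* The right $D(\mathfrak{D}_4)$-module $V=V_{17}\oplus V_{20}\oplus V_{21}$ (defined in the context) is inner faithful; in fact every simple $D(\mathfrak{D}_4)$-module occurs as a direct summand of $V^{\otimes m}$ for some $m\in\{1,2,3,4\}$.
   Context: Let $\Bbbk=\mathbb{C}$, $i=\sqrt{-1}$, and $\mathfrak{D}_4=\langle r,s\mid r^4=e,\ s^2=r^2,\ rsrs^{-1}=e\rangle$ (quaternion group of order 8). The Drinfeld double $D(G)$ of a finite group $G$ has basis $\{\phi_g h\}$, multiplication $(\phi_g h)(\phi_{g'}h')=\delta_{g,hg'h^{-1}}\phi_g hh'$, comultiplication $\Delta(\phi_g h)=\sum_x\phi_xh\otimes\phi_{x^{-1}g}h$, counit $\epsilon(\phi_gh)=\delta_{g,e}$; it is semisimple over $\mathbb{C}$. A right $D(G)$-module is a $G$-graded vector space $V=\bigoplus_xV_x$ with right $G$-action satisfying $V_x\cdot g\subseteq V_{g^{-1}xg}$, $\phi_x$ acting as projection onto $V_x$; tensor products are graded by products of grades with diagonal $G$-action. A module $V$ over a Hopf algebra $H$ is inner faithful if there is no nonzero Hopf ideal $I$ of $H$ with $VI=0$. The modules: $V_{17}$ has basis $u$ (grade $s$), $v$ (grade $sr^2$) with $u\cdot r=v$, $u\cdot s=-iu$, $v\cdot r=-u$, $v\cdot s=iv$. $V_{20}$ has basis $u$ (grade $sr$), $v$ (grade $sr^3$) with $u\cdot r=-v$, $u\cdot s=v$, $v\cdot r=-u$, $v\cdot s=u$. $V_{21}$ has basis $u$ (grade $sr$), $v$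 (grade $sr^3$) with $u\cdot r=-iv$, $u\cdot s=v$, $v\cdot r=-iu$, $v\cdot s=-u$. *)

theory Defs
  imports Complex_Main
begin

text \<open>Elements are stored in the normal form r^a s^b with a < 4, b < 2.
  Relations: r^4 = e, s^2 = r^2, s r s^-1 = r^-1 (equivalently r s r s^-1 = e).\<close>

typedef q8 = "{(a::nat, b::nat). a < 4 \<and> b < 2}"
  by (rule exI[of _ "(0,0)"]) simp

definition qmk :: "nat \<Rightarrow> nat \<Rightarrow> q8" where
  "qmk a b = Abs_q8 (a mod 4, b mod 2)"

definition qmul :: "q8 \<Rightarrow> q8 \<Rightarrow> q8" where
  "qmul x y = (case Rep_q8 x of (a, b) \<Rightarrow> case Rep_q8 y of (c, d) \<Rightarrow>
      qmk (a + (if b = 0 then c else 4 - c) + (if b = 1 \<and> d = 1 then 2 else 0)) (b + d))"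

definition qinv :: "q8 \<Rightarrow> q8" where
  "qinv x = (case Rep_q8 x of (a, b) \<Rightarrow> if b = 0 then qmk (4 - a) 0 else qmk (a + 2) 1)"

definition qe :: q8 where "qe = qmk 0 0"
definition qr :: q8 where "qr = qmk 1 0"
definition qs :: q8 where "qs = qmk 0 1"

definition qpow :: "q8 \<Rightarrow> nat \<Rightarrow> q8" where
  "qpow x n = (qmul x ^^ n) qe"

instance q8 :: finite
proof
  have "(UNIV :: q8 set) = Abs_q8 ` {(a::nat, b::nat). a < 4 \<and> b < 2}"
    by (metis type_definition.Abs_image type_definition_q8)
  moreover have "finite {(a::nat, b::nat). a < 4 \<and> b < 2}"
    by (rule finite_subset[of _ "{..<4} \<times> {..<2}"]) auto
  ultimately show "finite (UNIV :: q8 set)" by (metis finite_imageI)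
qed

text \<open>An element x of D(G) is given by its coefficients: x = sum of x(g,h) phi_g h.
  Elements of D(G) (x) D(G) are coefficient functions on pairs of basis elements.\<close>

type_synonym dd = "q8 \<times> q8 \<Rightarrow> complex"

definition dmul :: "dd \<Rightarrow> dd \<Rightarrow> dd" where
  "dmul x y = (\<lambda>(g, k). \<Sum>p\<in>UNIV. \<Sum>q\<in>UNIV.
     if fst p = g \<and> fst p = qmul (qmul (snd p) (fst q)) (qinv (snd p)) \<and> qmul (snd p) (snd q) = k
     then x p * y q else 0)"

text \<open>Delta(phi_g h) = sum_x phi_x h (x) phi_{x^-1 g} h.\<close>
definition dcomul :: "dd \<Rightarrow> (q8 \<times> q8) \<times> (q8 \<times> q8) \<Rightarrow> complex" where
  "dcomul x = (\<lambda>(p, q). if snd p = snd q then x (qmul (fst p) (fst q), snd p) else 0)"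

text \<open>epsilon(phi_g h) = delta_{g,e}.\<close>
definition dcounit :: "dd \<Rightarrow> complex" where
  "dcounit x = (\<Sum>h\<in>UNIV. x (qe, h))"

text \<open>Antipode S(phi_g h) = h^-1 phi_{g^-1} = phi_{h^-1 g^-1 h} h^-1.\<close>
definition dantipode :: "dd \<Rightarrow> dd" where
  "dantipode x = (\<lambda>(g, h). x (qmul (qmul (qinv h) (qinv g)) h, qinv h))"

definition tensor :: "('a \<Rightarrow> complex) \<Rightarrow> ('b \<Rightarrow> complex) \<Rightarrow> 'a \<times> 'b \<Rightarrow> complex" where
  "tensor a b = (\<lambda>(p, q). a p * b q)"

definition csubspace :: "('a \<Rightarrow> complex) set \<Rightarrow> bool" where
  "csubspace U \<longleftrightarrow> (\<lambda>_. 0) \<in> U \<and> (\<forall>x\<in>U. \<forall>y\<in>U. (\<lambda>p. x p + y p) \<in> U)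
     \<and> (\<forall>c. \<forall>x\<in>U. (\<lambda>p. c * x p) \<in> U)"

inductive_set cspan :: "('a \<Rightarrow> complex) set \<Rightarrow> ('a \<Rightarrow> complex) set" for S where
  zero: "(\<lambda>_. 0) \<in> cspan S"
| add: "x \<in> S \<Longrightarrow> y \<in> cspan S \<Longrightarrow> (\<lambda>p. c * x p + y p) \<in> cspan S"

text \<open>I is a two-sided ideal, a coideal (Delta(I) in I(x)H + H(x)I, epsilon(I) = 0)
  and stable under the antipode.  I(x)H + H(x)I is the span of the pure tensors a(x)b
  with a in I or b in I.\<close>
definition hopf_ideal :: "dd set \<Rightarrow> bool" where
  "hopf_ideal I \<longleftrightarrow> csubspace I
     \<and> (\<forall>x\<in>I. \<forall>y. dmul x y \<in> I \<and> dmul y x \<in> I)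
     \<and> (\<forall>x\<in>I. dcounit x = 0)
     \<and> (\<forall>x\<in>I. dcomul x \<in> cspan {tensor a b | a b. a \<in> I \<or> b \<in> I})
     \<and> (\<forall>x\<in>I. dantipode x \<in> I)"

text \<open>A module with basis indexed by B: act g h i j is the coefficient of e_j in e_i . (phi_g h).\<close>

type_synonym 'b dact = "q8 \<Rightarrow> q8 \<Rightarrow> 'b \<Rightarrow> 'b \<Rightarrow> complex"

definition is_module :: "'b set \<Rightarrow> 'b dact \<Rightarrow> bool" where
  "is_module B act \<longleftrightarrow>
     (\<forall>g h g' h'. \<forall>i\<in>B. \<forall>k\<in>B.
        (\<Sum>j\<in>B. act g h i j * act g' h' j k)
          = (if g = qmul (qmul h g') (qinv h) then act g (qmul h h') i k else 0))
     \<and> (\<forall>i\<in>B. \<forall>k\<in>B. (\<Sum>g\<in>UNIV. act g qe i k) = (if i = k then 1 else 0))"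

definition Vec :: "'b set \<Rightarrow> ('b \<Rightarrow> complex) set" where
  "Vec B = {v. \<forall>i. i \<notin> B \<longrightarrow> v i = 0}"

definition vact :: "'b set \<Rightarrow> 'b dact \<Rightarrow> q8 \<Rightarrow> q8 \<Rightarrow> ('b \<Rightarrow> complex) \<Rightarrow> ('b \<Rightarrow> complex)" where
  "vact B act g h v = (\<lambda>j. if j \<in> B then \<Sum>i\<in>B. v i * act g h i j else 0)"

definition dvact :: "'b set \<Rightarrow> 'b dact \<Rightarrow> dd \<Rightarrow> ('b \<Rightarrow> complex) \<Rightarrow> ('b \<Rightarrow> complex)" where
  "dvact B act x v = (\<lambda>j. if j \<in> B then \<Sum>i\<in>B. \<Sum>p\<in>UNIV. v i * x p * act (fst p) (snd p) i j else 0)"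

definition submodule :: "'b set \<Rightarrow> 'b dact \<Rightarrow> ('b \<Rightarrow> complex) set \<Rightarrow> bool" where
  "submodule B act U \<longleftrightarrow> U \<subseteq> Vec B \<and> csubspace U \<and> (\<forall>v\<in>U. \<forall>g h. vact B act g h v \<in> U)"

definition simple_module :: "'b set \<Rightarrow> 'b dact \<Rightarrow> bool" where
  "simple_module B act \<longleftrightarrow> B \<noteq> {} \<and>
     (\<forall>U. submodule B act U \<longrightarrow> U = {\<lambda>_. 0} \<or> U = Vec B)"

text \<open>Module homomorphism W -> W' given by a matrix F: e_i maps to sum_j F i j e'_j.\<close>
definition module_hom :: "'b set \<Rightarrow> 'b dact \<Rightarrow> 'c set \<Rightarrow> 'c dact \<Rightarrow> ('b \<Rightarrow> 'c \<Rightarrow> complex) \<Rightarrow> bool" where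
  "module_hom B act C act' F \<longleftrightarrow>
     (\<forall>g h. \<forall>i\<in>B. \<forall>k\<in>C. (\<Sum>j\<in>C. F i j * act' g h j k) = (\<Sum>j\<in>B. act g h i j * F j k))"

text \<open>W is (isomorphic to) a direct summand of W': a split monomorphism W -> W'.\<close>
definition direct_summand :: "'b set \<Rightarrow> 'b dact \<Rightarrow> 'c set \<Rightarrow> 'c dact \<Rightarrow> bool" where
  "direct_summand B act C act' \<longleftrightarrow> (\<exists>F G. module_hom B act C act' F \<and> module_hom C act' B act G
     \<and> (\<forall>i\<in>B. \<forall>k\<in>B. (\<Sum>j\<in>C. F i j * G j k) = (if i = k then 1 else 0)))"

definition inner_faithful :: "'b set \<Rightarrow> 'b dact \<Rightarrow> bool" where
  "inner_faithful B act \<longleftrightarrow> \<not> (\<exists>I. hopf_ideal I \<and> I \<noteq> {\<lambda>_. 0}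
      \<and> (\<forall>x\<in>I. \<forall>v. \<forall>j\<in>B. dvact B act x v j = 0))"

text \<open>Module from a G-graded space with homogeneous basis (grade gr) and right G-action
  with matrices A h: e_i . (phi_g h) = delta_{gr i, g} e_i . h.\<close>
definition grmod :: "('b \<Rightarrow> q8) \<Rightarrow> (q8 \<Rightarrow> 'b \<Rightarrow> 'b \<Rightarrow> complex) \<Rightarrow> 'b dact" where
  "grmod gr A g h i j = (if gr i = g then A h i j else 0)"

datatype vb = U17 | V17 | U20 | V20 | U21 | V21

instance vb :: finite
proof
  have "(UNIV :: vb set) = {U17, V17, U20, V20, U21, V21}"
    using vb.exhaust by auto
  then show "finite (UNIV :: vb set)" by (metis finite.emptyI finite_insert)
qed

definition mmul :: "(vb \<Rightarrow> vb \<Rightarrow> complex) \<Rightarrow> (vb \<Rightarrow> vb \<Rightarrow> complex) \<Rightarrow> vb \<Rightarrow> vb \<Rightarrow> complex" where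
  "mmul M N i k = (\<Sum>j\<in>UNIV. M i j * N j k)"

definition mid :: "vb \<Rightarrow> vb \<Rightarrow> complex" where
  "mid i k = (if i = k then 1 else 0)"

definition mpow :: "(vb \<Rightarrow> vb \<Rightarrow> complex) \<Rightarrow> nat \<Rightarrow> vb \<Rightarrow> vb \<Rightarrow> complex" where
  "mpow M n = ((\<lambda>X. mmul X M) ^^ n) mid"

text \<open>VR b c = coefficient of c in b . r ; VS likewise for s.\<close>
fun VR :: "vb \<Rightarrow> vb \<Rightarrow> complex" where
  "VR U17 V17 = 1"
| "VR V17 U17 = -1"
| "VR U20 V20 = -1"
| "VR V20 U20 = -1"
| "VR U21 V21 = - \<i>"
| "VR V21 U21 = - \<i>"
| "VR _ _ = 0"

fun VS :: "vb \<Rightarrow> vb \<Rightarrow> complex" where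
  "VS U17 U17 = - \<i>"
| "VS V17 V17 = \<i>"
| "VS U20 V20 = 1"
| "VS V20 U20 = 1"
| "VS U21 V21 = 1"
| "VS V21 U21 = -1"
| "VS _ _ = 0"

definition VA :: "q8 \<Rightarrow> vb \<Rightarrow> vb \<Rightarrow> complex" where
  "VA h = (case Rep_q8 h of (a, b) \<Rightarrow> mmul (mpow VR a) (mpow VS b))"

fun Vgr :: "vb \<Rightarrow> q8" where
  "Vgr U17 = qs"
| "Vgr V17 = qmul qs (qpow qr 2)"
| "Vgr U20 = qmul qs qr"
| "Vgr V20 = qmul qs (qpow qr 3)"
| "Vgr U21 = qmul qs qr"
| "Vgr V21 = qmul qs (qpow qr 3)"

section \<open>Tensor powers of V, basis: lists of length m\<close>

fun tgr :: "vb list \<Rightarrow> q8" where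
  "tgr [] = qe"
| "tgr (b # bs) = qmul (Vgr b) (tgr bs)"

fun tA :: "q8 \<Rightarrow> vb list \<Rightarrow> vb list \<Rightarrow> complex" where
  "tA h [] [] = 1"
| "tA h (b # bs) (c # cs) = VA h b c * tA h bs cs"
| "tA h _ _ = 0"

end

theory Submission
  imports Defs
begin


declare One_nat_def [simp del]

lemma Rep_qmk[simp]: "Rep_q8 (qmk a b) = (a mod 4, b mod 2)"
  unfolding qmk_def by (simp add: Abs_q8_inverse)

lemma qmk_eq_iff: "qmk a b = qmk c d \<longleftrightarrow> a mod 4 = c mod 4 \<and> b mod 2 = d mod 2"
  by (metis Rep_qmk Rep_q8_inject prod.inject)

lemma q8_cases: obtains a b where "x = qmk a b" "a < 4" "b < 2"
proof -
  obtain a b where "Rep_q8 x = (a,b)" "a < 4" "b < 2" using Rep_q8[of x] by auto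
  then have "x = qmk a b" by (metis Rep_qmk Rep_q8_inject mod_less)
  then show ?thesis using that \<open>a<4\<close> \<open>b<2\<close> by blast
qed

lemma UNIV_q8: "(UNIV::q8 set) = {qmk 0 0, qmk 1 0, qmk 2 0, qmk 3 0, qmk 0 1, qmk 1 1, qmk 2 1, qmk 3 1}"
proof -
  { fix x :: q8
    obtain a b where "x = qmk a b" "a < 4" "b < 2" by (rule q8_cases)
    then have "x \<in> {qmk 0 0, qmk 1 0, qmk 2 0, qmk 3 0, qmk 0 1, qmk 1 1, qmk 2 1, qmk 3 1}"
      by (auto simp: less_Suc_eq numeral_eq_Suc One_nat_def) }
  then show ?thesis by auto
qed

lemma q8_all: "(\<forall>x::q8. P x) \<longleftrightarrow> P (qmk 0 0) \<and> P (qmk 1 0) \<and> P (qmk 2 0) \<and> P (qmk 3 0) \<and> P (qmk 0 1) \<and> P (qmk 1 1) \<and> P (qmk 2 1) \<and> P (qmk 3 1)"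
  by (metis UNIV_I UNIV_q8 insert_iff singletonD)

lemma sum_q8: "(\<Sum>x\<in>UNIV. f x) = f (qmk 0 0) + f (qmk 1 0) + f (qmk 2 0) + f (qmk 3 0) + f (qmk 0 1) + f (qmk 1 1) + f (qmk 2 1) + f (qmk 3 1)"
  unfolding UNIV_q8 by (simp add: qmk_eq_iff add.assoc)

lemma qmul_qmk: "qmul (qmk a b) (qmk c d) = qmk (a mod 4 + (if b mod 2 = 0 then c mod 4 else 4 - c mod 4) + (if b mod 2 = 1 \<and> d mod 2 = 1 then 2 else 0)) (b mod 2 + d mod 2)"
  unfolding qmul_def by simp

lemma qinv_qmk: "qinv (qmk a b) = (if b mod 2 = 0 then qmk (4 - a mod 4) 0 else qmk (a mod 4 + 2) 1)"
  unfolding qinv_def by simp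

lemma qmk_norm: "qmk a b = qmk (a mod 4) (b mod 2)"
  by (simp add: qmk_eq_iff)

lemma qmul_tab[simp]:
  "qmul (qmk 0 0) (qmk 0 0) = qmk 0 0"
  "qmul (qmk 0 0) (qmk 0 1) = qmk 0 1"
  "qmul (qmk 0 0) (qmk 1 0) = qmk 1 0"
  "qmul (qmk 0 0) (qmk 1 1) = qmk 1 1"
  "qmul (qmk 0 0) (qmk 2 0) = qmk 2 0"
  "qmul (qmk 0 0) (qmk 2 1) = qmk 2 1"
  "qmul (qmk 0 0) (qmk 3 0) = qmk 3 0"
  "qmul (qmk 0 0) (qmk 3 1) = qmk 3 1"
  "qmul (qmk 0 1) (qmk 0 0) = qmk 0 1"
  "qmul (qmk 0 1) (qmk 0 1) = qmk 2 0"
  "qmul (qmk 0 1) (qmk 1 0) = qmk 3 1"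
  "qmul (qmk 0 1) (qmk 1 1) = qmk 1 0"
  "qmul (qmk 0 1) (qmk 2 0) = qmk 2 1"
  "qmul (qmk 0 1) (qmk 2 1) = qmk 0 0"
  "qmul (qmk 0 1) (qmk 3 0) = qmk 1 1"
  "qmul (qmk 0 1) (qmk 3 1) = qmk 3 0"
  "qmul (qmk 1 0) (qmk 0 0) = qmk 1 0"
  "qmul (qmk 1 0) (qmk 0 1) = qmk 1 1"
  "qmul (qmk 1 0) (qmk 1 0) = qmk 2 0"
  "qmul (qmk 1 0) (qmk 1 1) = qmk 2 1"
  "qmul (qmk 1 0) (qmk 2 0) = qmk 3 0"
  "qmul (qmk 1 0) (qmk 2 1) = qmk 3 1"
  "qmul (qmk 1 0) (qmk 3 0) = qmk 0 0"
  "qmul (qmk 1 0) (qmk 3 1) = qmk 0 1"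
  "qmul (qmk 1 1) (qmk 0 0) = qmk 1 1"
  "qmul (qmk 1 1) (qmk 0 1) = qmk 3 0"
  "qmul (qmk 1 1) (qmk 1 0) = qmk 0 1"
  "qmul (qmk 1 1) (qmk 1 1) = qmk 2 0"
  "qmul (qmk 1 1) (qmk 2 0) = qmk 3 1"
  "qmul (qmk 1 1) (qmk 2 1) = qmk 1 0"
  "qmul (qmk 1 1) (qmk 3 0) = qmk 2 1"
  "qmul (qmk 1 1) (qmk 3 1) = qmk 0 0"
  "qmul (qmk 2 0) (qmk 0 0) = qmk 2 0"
  "qmul (qmk 2 0) (qmk 0 1) = qmk 2 1"
  "qmul (qmk 2 0) (qmk 1 0) = qmk 3 0"
  "qmul (qmk 2 0) (qmk 1 1) = qmk 3 1"
  "qmul (qmk 2 0) (qmk 2 0) = qmk 0 0"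
  "qmul (qmk 2 0) (qmk 2 1) = qmk 0 1"
  "qmul (qmk 2 0) (qmk 3 0) = qmk 1 0"
  "qmul (qmk 2 0) (qmk 3 1) = qmk 1 1"
  "qmul (qmk 2 1) (qmk 0 0) = qmk 2 1"
  "qmul (qmk 2 1) (qmk 0 1) = qmk 0 0"
  "qmul (qmk 2 1) (qmk 1 0) = qmk 1 1"
  "qmul (qmk 2 1) (qmk 1 1) = qmk 3 0"
  "qmul (qmk 2 1) (qmk 2 0) = qmk 0 1"
  "qmul (qmk 2 1) (qmk 2 1) = qmk 2 0"
  "qmul (qmk 2 1) (qmk 3 0) = qmk 3 1"
  "qmul (qmk 2 1) (qmk 3 1) = qmk 1 0"
  "qmul (qmk 3 0) (qmk 0 0) = qmk 3 0"
  "qmul (qmk 3 0) (qmk 0 1) = qmk 3 1"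
  "qmul (qmk 3 0) (qmk 1 0) = qmk 0 0"
  "qmul (qmk 3 0) (qmk 1 1) = qmk 0 1"
  "qmul (qmk 3 0) (qmk 2 0) = qmk 1 0"
  "qmul (qmk 3 0) (qmk 2 1) = qmk 1 1"
  "qmul (qmk 3 0) (qmk 3 0) = qmk 2 0"
  "qmul (qmk 3 0) (qmk 3 1) = qmk 2 1"
  "qmul (qmk 3 1) (qmk 0 0) = qmk 3 1"
  "qmul (qmk 3 1) (qmk 0 1) = qmk 1 0"
  "qmul (qmk 3 1) (qmk 1 0) = qmk 2 1"
  "qmul (qmk 3 1) (qmk 1 1) = qmk 0 0"
  "qmul (qmk 3 1) (qmk 2 0) = qmk 1 1"
  "qmul (qmk 3 1) (qmk 2 1) = qmk 3 0"
  "qmul (qmk 3 1) (qmk 3 0) = qmk 0 1"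
  "qmul (qmk 3 1) (qmk 3 1) = qmk 2 0"
  by (simp_all add: qmul_qmk qmk_eq_iff)

lemma qinv_tab[simp]:
  "qinv (qmk 0 0) = qmk 0 0"
  "qinv (qmk 0 1) = qmk 2 1"
  "qinv (qmk 1 0) = qmk 3 0"
  "qinv (qmk 1 1) = qmk 3 1"
  "qinv (qmk 2 0) = qmk 2 0"
  "qinv (qmk 2 1) = qmk 0 1"
  "qinv (qmk 3 0) = qmk 1 0"
  "qinv (qmk 3 1) = qmk 1 1"
  by (simp_all add: qinv_qmk qmk_eq_iff)


lemma qmul_assoc: "qmul (qmul x y) z = qmul x (qmul y z)"
proof -
  obtain a b where x: "x = qmk a b" "a < 4" "b < 2" by (rule q8_cases)
  obtain c d where y: "y = qmk c d" "c < 4" "d < 2" by (rule q8_cases)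
  obtain e f where z: "z = qmk e f" "e < 4" "f < 2" by (rule q8_cases)
  have "\<forall>x y z. qmul (qmul x y) z = qmul x (qmul y z)"
    unfolding q8_all by (simp add: qmul_qmk qmk_eq_iff)
  then show ?thesis by blast
qed


lemma q8_unit: "qe = qmk 0 0" "qr = qmk 1 0" "qs = qmk 0 1"
  by (simp_all add: qe_def qr_def qs_def)

lemma qpow_simps[simp]: "qpow x 0 = qe" "qpow x (Suc n) = qmul x (qpow x n)"
  by (simp_all add: qpow_def qe_def)

lemma vb_all: "(\<forall>x::vb. P x) \<longleftrightarrow> P U17 \<and> P V17 \<and> P U20 \<and> P V20 \<and> P U21 \<and> P V21"
  by (metis vb.exhaust)

lemma UNIV_vb: "(UNIV::vb set) = {U17, V17, U20, V20, U21, V21}"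
  using vb.exhaust by auto

lemma sum_vb: "(\<Sum>x\<in>UNIV. f x) = f U17 + f V17 + f U20 + f V20 + f U21 + f V21"
  unfolding UNIV_vb by (simp add: add.assoc)

definition R2 where "R2 = mmul VR VR"
definition R3 where "R3 = mmul R2 VR"

lemma R2_tab[simp]:
  "R2 U17 U17 = -1"
  "R2 U17 V17 = 0"
  "R2 U17 U20 = 0"
  "R2 U17 V20 = 0"
  "R2 U17 U21 = 0"
  "R2 U17 V21 = 0"
  "R2 V17 U17 = 0"
  "R2 V17 V17 = -1"
  "R2 V17 U20 = 0"
  "R2 V17 V20 = 0"
  "R2 V17 U21 = 0"
  "R2 V17 V21 = 0"
  "R2 U20 U17 = 0"
  "R2 U20 V17 = 0"
  "R2 U20 U20 = 1"
  "R2 U20 V20 = 0"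
  "R2 U20 U21 = 0"
  "R2 U20 V21 = 0"
  "R2 V20 U17 = 0"
  "R2 V20 V17 = 0"
  "R2 V20 U20 = 0"
  "R2 V20 V20 = 1"
  "R2 V20 U21 = 0"
  "R2 V20 V21 = 0"
  "R2 U21 U17 = 0"
  "R2 U21 V17 = 0"
  "R2 U21 U20 = 0"
  "R2 U21 V20 = 0"
  "R2 U21 U21 = -1"
  "R2 U21 V21 = 0"
  "R2 V21 U17 = 0"
  "R2 V21 V17 = 0"
  "R2 V21 U20 = 0"
  "R2 V21 V20 = 0"
  "R2 V21 U21 = 0"
  "R2 V21 V21 = -1"
  by (simp_all add: R2_def mmul_def sum_vb)

lemma R3_tab[simp]:
  "R3 U17 U17 = 0"
  "R3 U17 V17 = -1"
  "R3 U17 U20 = 0"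
  "R3 U17 V20 = 0"
  "R3 U17 U21 = 0"
  "R3 U17 V21 = 0"
  "R3 V17 U17 = 1"
  "R3 V17 V17 = 0"
  "R3 V17 U20 = 0"
  "R3 V17 V20 = 0"
  "R3 V17 U21 = 0"
  "R3 V17 V21 = 0"
  "R3 U20 U17 = 0"
  "R3 U20 V17 = 0"
  "R3 U20 U20 = 0"
  "R3 U20 V20 = -1"
  "R3 U20 U21 = 0"
  "R3 U20 V21 = 0"
  "R3 V20 U17 = 0"
  "R3 V20 V17 = 0"
  "R3 V20 U20 = -1"
  "R3 V20 V20 = 0"
  "R3 V20 U21 = 0"
  "R3 V20 V21 = 0"
  "R3 U21 U17 = 0"
  "R3 U21 V17 = 0"
  "R3 U21 U20 = 0"
  "R3 U21 V20 = 0"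
  "R3 U21 U21 = 0"
  "R3 U21 V21 = \<i>"
  "R3 V21 U17 = 0"
  "R3 V21 V17 = 0"
  "R3 V21 U20 = 0"
  "R3 V21 V20 = 0"
  "R3 V21 U21 = \<i>"
  "R3 V21 V21 = 0"
  by (simp_all add: R3_def mmul_def sum_vb)

lemma mmul_mid: "mmul mid M = M"
proof -
  have "\<And>i k. (\<Sum>j\<in>UNIV. mid i j * M j k) = M i k"
  proof -
    fix i k
    have "(\<Sum>j\<in>UNIV. mid i j * M j k) = (\<Sum>j\<in>UNIV. if i = j then M j k else 0)"
      by (rule sum.cong) (auto simp: mid_def)
    then show "(\<Sum>j\<in>UNIV. mid i j * M j k) = M i k" by simp
  qed
  then show ?thesis unfolding mmul_def by (intro ext) simp
qed

lemma mpow_vals: "mpow M 0 = mid" "mpow M (Suc n) = mmul (mpow M n) M"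
  by (simp_all add: mpow_def)

lemma mmul_mid2: "mmul M mid = M"
proof -
  have "\<And>i k. (\<Sum>j\<in>UNIV. M i j * mid j k) = M i k"
  proof -
    fix i k
    have "(\<Sum>j\<in>UNIV. M i j * mid j k) = (\<Sum>j\<in>UNIV. if j = k then M i j else 0)"
      by (rule sum.cong) (auto simp: mid_def)
    then show "(\<Sum>j\<in>UNIV. M i j * mid j k) = M i k" by simp
  qed
  then show ?thesis unfolding mmul_def by (intro ext) simp
qed
lemma mpow_small: "mpow M 0 = mid" "mpow M (Suc 0) = M" "mpow M 1 = M" "mpow M 2 = mmul M M" "mpow M 3 = mmul (mmul M M) M"
  by (simp_all add: mpow_def mmul_mid eval_nat_numeral One_nat_def)
lemma VA_cases: "VA (qmk 0 0) = mid" "VA (qmk 1 0) = VR" "VA (qmk 2 0) = R2" "VA (qmk 3 0) = R3"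
  "VA (qmk 0 1) = VS" "VA (qmk 1 1) = mmul VR VS" "VA (qmk 2 1) = mmul R2 VS" "VA (qmk 3 1) = mmul R3 VS"
  by (simp_all add: VA_def mpow_small mmul_mid mmul_mid2 R2_def R3_def)
lemma VA_tab[simp]:
  "VA (qmk 0 0) U17 U17 = 1"
  "VA (qmk 0 0) U17 V17 = 0"
  "VA (qmk 0 0) U17 U20 = 0"
  "VA (qmk 0 0) U17 V20 = 0"
  "VA (qmk 0 0) U17 U21 = 0"
  "VA (qmk 0 0) U17 V21 = 0"
  "VA (qmk 0 0) V17 U17 = 0"
  "VA (qmk 0 0) V17 V17 = 1"
  "VA (qmk 0 0) V17 U20 = 0"
  "VA (qmk 0 0) V17 V20 = 0"
  "VA (qmk 0 0) V17 U21 = 0"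
  "VA (qmk 0 0) V17 V21 = 0"
  "VA (qmk 0 0) U20 U17 = 0"
  "VA (qmk 0 0) U20 V17 = 0"
  "VA (qmk 0 0) U20 U20 = 1"
  "VA (qmk 0 0) U20 V20 = 0"
  "VA (qmk 0 0) U20 U21 = 0"
  "VA (qmk 0 0) U20 V21 = 0"
  "VA (qmk 0 0) V20 U17 = 0"
  "VA (qmk 0 0) V20 V17 = 0"
  "VA (qmk 0 0) V20 U20 = 0"
  "VA (qmk 0 0) V20 V20 = 1"
  "VA (qmk 0 0) V20 U21 = 0"
  "VA (qmk 0 0) V20 V21 = 0"
  "VA (qmk 0 0) U21 U17 = 0"
  "VA (qmk 0 0) U21 V17 = 0"
  "VA (qmk 0 0) U21 U20 = 0"
  "VA (qmk 0 0) U21 V20 = 0"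
  "VA (qmk 0 0) U21 U21 = 1"
  "VA (qmk 0 0) U21 V21 = 0"
  "VA (qmk 0 0) V21 U17 = 0"
  "VA (qmk 0 0) V21 V17 = 0"
  "VA (qmk 0 0) V21 U20 = 0"
  "VA (qmk 0 0) V21 V20 = 0"
  "VA (qmk 0 0) V21 U21 = 0"
  "VA (qmk 0 0) V21 V21 = 1"
  "VA (qmk 0 1) U17 U17 = -\<i>"
  "VA (qmk 0 1) U17 V17 = 0"
  "VA (qmk 0 1) U17 U20 = 0"
  "VA (qmk 0 1) U17 V20 = 0"
  "VA (qmk 0 1) U17 U21 = 0"
  "VA (qmk 0 1) U17 V21 = 0"
  "VA (qmk 0 1) V17 U17 = 0"
  "VA (qmk 0 1) V17 V17 = \<i>"
  "VA (qmk 0 1) V17 U20 = 0"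
  "VA (qmk 0 1) V17 V20 = 0"
  "VA (qmk 0 1) V17 U21 = 0"
  "VA (qmk 0 1) V17 V21 = 0"
  "VA (qmk 0 1) U20 U17 = 0"
  "VA (qmk 0 1) U20 V17 = 0"
  "VA (qmk 0 1) U20 U20 = 0"
  "VA (qmk 0 1) U20 V20 = 1"
  "VA (qmk 0 1) U20 U21 = 0"
  "VA (qmk 0 1) U20 V21 = 0"
  "VA (qmk 0 1) V20 U17 = 0"
  "VA (qmk 0 1) V20 V17 = 0"
  "VA (qmk 0 1) V20 U20 = 1"
  "VA (qmk 0 1) V20 V20 = 0"
  "VA (qmk 0 1) V20 U21 = 0"
  "VA (qmk 0 1) V20 V21 = 0"
  "VA (qmk 0 1) U21 U17 = 0"
  "VA (qmk 0 1) U21 V17 = 0"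
  "VA (qmk 0 1) U21 U20 = 0"
  "VA (qmk 0 1) U21 V20 = 0"
  "VA (qmk 0 1) U21 U21 = 0"
  "VA (qmk 0 1) U21 V21 = 1"
  "VA (qmk 0 1) V21 U17 = 0"
  "VA (qmk 0 1) V21 V17 = 0"
  "VA (qmk 0 1) V21 U20 = 0"
  "VA (qmk 0 1) V21 V20 = 0"
  "VA (qmk 0 1) V21 U21 = -1"
  "VA (qmk 0 1) V21 V21 = 0"
  "VA (qmk 1 0) U17 U17 = 0"
  "VA (qmk 1 0) U17 V17 = 1"
  "VA (qmk 1 0) U17 U20 = 0"
  "VA (qmk 1 0) U17 V20 = 0"
  "VA (qmk 1 0) U17 U21 = 0"
  "VA (qmk 1 0) U17 V21 = 0"
  "VA (qmk 1 0) V17 U17 = -1"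
  "VA (qmk 1 0) V17 V17 = 0"
  "VA (qmk 1 0) V17 U20 = 0"
  "VA (qmk 1 0) V17 V20 = 0"
  "VA (qmk 1 0) V17 U21 = 0"
  "VA (qmk 1 0) V17 V21 = 0"
  "VA (qmk 1 0) U20 U17 = 0"
  "VA (qmk 1 0) U20 V17 = 0"
  "VA (qmk 1 0) U20 U20 = 0"
  "VA (qmk 1 0) U20 V20 = -1"
  "VA (qmk 1 0) U20 U21 = 0"
  "VA (qmk 1 0) U20 V21 = 0"
  "VA (qmk 1 0) V20 U17 = 0"
  "VA (qmk 1 0) V20 V17 = 0"
  "VA (qmk 1 0) V20 U20 = -1"
  "VA (qmk 1 0) V20 V20 = 0"
  "VA (qmk 1 0) V20 U21 = 0"
  "VA (qmk 1 0) V20 V21 = 0"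
  "VA (qmk 1 0) U21 U17 = 0"
  "VA (qmk 1 0) U21 V17 = 0"
  "VA (qmk 1 0) U21 U20 = 0"
  "VA (qmk 1 0) U21 V20 = 0"
  "VA (qmk 1 0) U21 U21 = 0"
  "VA (qmk 1 0) U21 V21 = -\<i>"
  "VA (qmk 1 0) V21 U17 = 0"
  "VA (qmk 1 0) V21 V17 = 0"
  "VA (qmk 1 0) V21 U20 = 0"
  "VA (qmk 1 0) V21 V20 = 0"
  "VA (qmk 1 0) V21 U21 = -\<i>"
  "VA (qmk 1 0) V21 V21 = 0"
  "VA (qmk 1 1) U17 U17 = 0"
  "VA (qmk 1 1) U17 V17 = \<i>"
  "VA (qmk 1 1) U17 U20 = 0"
  "VA (qmk 1 1) U17 V20 = 0"
  "VA (qmk 1 1) U17 U21 = 0"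
  "VA (qmk 1 1) U17 V21 = 0"
  "VA (qmk 1 1) V17 U17 = \<i>"
  "VA (qmk 1 1) V17 V17 = 0"
  "VA (qmk 1 1) V17 U20 = 0"
  "VA (qmk 1 1) V17 V20 = 0"
  "VA (qmk 1 1) V17 U21 = 0"
  "VA (qmk 1 1) V17 V21 = 0"
  "VA (qmk 1 1) U20 U17 = 0"
  "VA (qmk 1 1) U20 V17 = 0"
  "VA (qmk 1 1) U20 U20 = -1"
  "VA (qmk 1 1) U20 V20 = 0"
  "VA (qmk 1 1) U20 U21 = 0"
  "VA (qmk 1 1) U20 V21 = 0"
  "VA (qmk 1 1) V20 U17 = 0"
  "VA (qmk 1 1) V20 V17 = 0"
  "VA (qmk 1 1) V20 U20 = 0"
  "VA (qmk 1 1) V20 V20 = -1"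
  "VA (qmk 1 1) V20 U21 = 0"
  "VA (qmk 1 1) V20 V21 = 0"
  "VA (qmk 1 1) U21 U17 = 0"
  "VA (qmk 1 1) U21 V17 = 0"
  "VA (qmk 1 1) U21 U20 = 0"
  "VA (qmk 1 1) U21 V20 = 0"
  "VA (qmk 1 1) U21 U21 = \<i>"
  "VA (qmk 1 1) U21 V21 = 0"
  "VA (qmk 1 1) V21 U17 = 0"
  "VA (qmk 1 1) V21 V17 = 0"
  "VA (qmk 1 1) V21 U20 = 0"
  "VA (qmk 1 1) V21 V20 = 0"
  "VA (qmk 1 1) V21 U21 = 0"
  "VA (qmk 1 1) V21 V21 = -\<i>"
  "VA (qmk 2 0) U17 U17 = -1"
  "VA (qmk 2 0) U17 V17 = 0"
  "VA (qmk 2 0) U17 U20 = 0"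
  "VA (qmk 2 0) U17 V20 = 0"
  "VA (qmk 2 0) U17 U21 = 0"
  "VA (qmk 2 0) U17 V21 = 0"
  "VA (qmk 2 0) V17 U17 = 0"
  "VA (qmk 2 0) V17 V17 = -1"
  "VA (qmk 2 0) V17 U20 = 0"
  "VA (qmk 2 0) V17 V20 = 0"
  "VA (qmk 2 0) V17 U21 = 0"
  "VA (qmk 2 0) V17 V21 = 0"
  "VA (qmk 2 0) U20 U17 = 0"
  "VA (qmk 2 0) U20 V17 = 0"
  "VA (qmk 2 0) U20 U20 = 1"
  "VA (qmk 2 0) U20 V20 = 0"
  "VA (qmk 2 0) U20 U21 = 0"
  "VA (qmk 2 0) U20 V21 = 0"
  "VA (qmk 2 0) V20 U17 = 0"
  "VA (qmk 2 0) V20 V17 = 0"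
  "VA (qmk 2 0) V20 U20 = 0"
  "VA (qmk 2 0) V20 V20 = 1"
  "VA (qmk 2 0) V20 U21 = 0"
  "VA (qmk 2 0) V20 V21 = 0"
  "VA (qmk 2 0) U21 U17 = 0"
  "VA (qmk 2 0) U21 V17 = 0"
  "VA (qmk 2 0) U21 U20 = 0"
  "VA (qmk 2 0) U21 V20 = 0"
  "VA (qmk 2 0) U21 U21 = -1"
  "VA (qmk 2 0) U21 V21 = 0"
  "VA (qmk 2 0) V21 U17 = 0"
  "VA (qmk 2 0) V21 V17 = 0"
  "VA (qmk 2 0) V21 U20 = 0"
  "VA (qmk 2 0) V21 V20 = 0"
  "VA (qmk 2 0) V21 U21 = 0"
  "VA (qmk 2 0) V21 V21 = -1"
  "VA (qmk 2 1) U17 U17 = \<i>"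
  "VA (qmk 2 1) U17 V17 = 0"
  "VA (qmk 2 1) U17 U20 = 0"
  "VA (qmk 2 1) U17 V20 = 0"
  "VA (qmk 2 1) U17 U21 = 0"
  "VA (qmk 2 1) U17 V21 = 0"
  "VA (qmk 2 1) V17 U17 = 0"
  "VA (qmk 2 1) V17 V17 = -\<i>"
  "VA (qmk 2 1) V17 U20 = 0"
  "VA (qmk 2 1) V17 V20 = 0"
  "VA (qmk 2 1) V17 U21 = 0"
  "VA (qmk 2 1) V17 V21 = 0"
  "VA (qmk 2 1) U20 U17 = 0"
  "VA (qmk 2 1) U20 V17 = 0"
  "VA (qmk 2 1) U20 U20 = 0"
  "VA (qmk 2 1) U20 V20 = 1"
  "VA (qmk 2 1) U20 U21 = 0"
  "VA (qmk 2 1) U20 V21 = 0"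
  "VA (qmk 2 1) V20 U17 = 0"
  "VA (qmk 2 1) V20 V17 = 0"
  "VA (qmk 2 1) V20 U20 = 1"
  "VA (qmk 2 1) V20 V20 = 0"
  "VA (qmk 2 1) V20 U21 = 0"
  "VA (qmk 2 1) V20 V21 = 0"
  "VA (qmk 2 1) U21 U17 = 0"
  "VA (qmk 2 1) U21 V17 = 0"
  "VA (qmk 2 1) U21 U20 = 0"
  "VA (qmk 2 1) U21 V20 = 0"
  "VA (qmk 2 1) U21 U21 = 0"
  "VA (qmk 2 1) U21 V21 = -1"
  "VA (qmk 2 1) V21 U17 = 0"
  "VA (qmk 2 1) V21 V17 = 0"
  "VA (qmk 2 1) V21 U20 = 0"
  "VA (qmk 2 1) V21 V20 = 0"
  "VA (qmk 2 1) V21 U21 = 1"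
  "VA (qmk 2 1) V21 V21 = 0"
  "VA (qmk 3 0) U17 U17 = 0"
  "VA (qmk 3 0) U17 V17 = -1"
  "VA (qmk 3 0) U17 U20 = 0"
  "VA (qmk 3 0) U17 V20 = 0"
  "VA (qmk 3 0) U17 U21 = 0"
  "VA (qmk 3 0) U17 V21 = 0"
  "VA (qmk 3 0) V17 U17 = 1"
  "VA (qmk 3 0) V17 V17 = 0"
  "VA (qmk 3 0) V17 U20 = 0"
  "VA (qmk 3 0) V17 V20 = 0"
  "VA (qmk 3 0) V17 U21 = 0"
  "VA (qmk 3 0) V17 V21 = 0"
  "VA (qmk 3 0) U20 U17 = 0"
  "VA (qmk 3 0) U20 V17 = 0"
  "VA (qmk 3 0) U20 U20 = 0"
  "VA (qmk 3 0) U20 V20 = -1"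
  "VA (qmk 3 0) U20 U21 = 0"
  "VA (qmk 3 0) U20 V21 = 0"
  "VA (qmk 3 0) V20 U17 = 0"
  "VA (qmk 3 0) V20 V17 = 0"
  "VA (qmk 3 0) V20 U20 = -1"
  "VA (qmk 3 0) V20 V20 = 0"
  "VA (qmk 3 0) V20 U21 = 0"
  "VA (qmk 3 0) V20 V21 = 0"
  "VA (qmk 3 0) U21 U17 = 0"
  "VA (qmk 3 0) U21 V17 = 0"
  "VA (qmk 3 0) U21 U20 = 0"
  "VA (qmk 3 0) U21 V20 = 0"
  "VA (qmk 3 0) U21 U21 = 0"
  "VA (qmk 3 0) U21 V21 = \<i>"
  "VA (qmk 3 0) V21 U17 = 0"
  "VA (qmk 3 0) V21 V17 = 0"
  "VA (qmk 3 0) V21 U20 = 0"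
  "VA (qmk 3 0) V21 V20 = 0"
  "VA (qmk 3 0) V21 U21 = \<i>"
  "VA (qmk 3 0) V21 V21 = 0"
  "VA (qmk 3 1) U17 U17 = 0"
  "VA (qmk 3 1) U17 V17 = -\<i>"
  "VA (qmk 3 1) U17 U20 = 0"
  "VA (qmk 3 1) U17 V20 = 0"
  "VA (qmk 3 1) U17 U21 = 0"
  "VA (qmk 3 1) U17 V21 = 0"
  "VA (qmk 3 1) V17 U17 = -\<i>"
  "VA (qmk 3 1) V17 V17 = 0"
  "VA (qmk 3 1) V17 U20 = 0"
  "VA (qmk 3 1) V17 V20 = 0"
  "VA (qmk 3 1) V17 U21 = 0"
  "VA (qmk 3 1) V17 V21 = 0"
  "VA (qmk 3 1) U20 U17 = 0"
  "VA (qmk 3 1) U20 V17 = 0"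
  "VA (qmk 3 1) U20 U20 = -1"
  "VA (qmk 3 1) U20 V20 = 0"
  "VA (qmk 3 1) U20 U21 = 0"
  "VA (qmk 3 1) U20 V21 = 0"
  "VA (qmk 3 1) V20 U17 = 0"
  "VA (qmk 3 1) V20 V17 = 0"
  "VA (qmk 3 1) V20 U20 = 0"
  "VA (qmk 3 1) V20 V20 = -1"
  "VA (qmk 3 1) V20 U21 = 0"
  "VA (qmk 3 1) V20 V21 = 0"
  "VA (qmk 3 1) U21 U17 = 0"
  "VA (qmk 3 1) U21 V17 = 0"
  "VA (qmk 3 1) U21 U20 = 0"
  "VA (qmk 3 1) U21 V20 = 0"
  "VA (qmk 3 1) U21 U21 = -\<i>"
  "VA (qmk 3 1) U21 V21 = 0"
  "VA (qmk 3 1) V21 U17 = 0"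
  "VA (qmk 3 1) V21 V17 = 0"
  "VA (qmk 3 1) V21 U20 = 0"
  "VA (qmk 3 1) V21 V20 = 0"
  "VA (qmk 3 1) V21 U21 = 0"
  "VA (qmk 3 1) V21 V21 = \<i>"
  unfolding VA_cases by (simp_all add: mid_def mmul_def sum_vb)


lemma grp_basic: "qmul qe x = x" "qmul x qe = x" "qmul x (qinv x) = qe" "qmul (qinv x) x = qe"
proof -
  have "\<forall>x. qmul qe x = x \<and> qmul x qe = x \<and> qmul x (qinv x) = qe \<and> qmul (qinv x) x = qe"
    unfolding q8_all q8_unit by simp
  then show "qmul qe x = x" "qmul x qe = x" "qmul x (qinv x) = qe" "qmul (qinv x) x = qe" by auto
qed

lemma qpow23: "qpow x 2 = qmul x (qmul x qe)" "qpow x 3 = qmul x (qmul x (qmul x qe))"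
  by (simp_all add: qpow_def numeral_2_eq_2 numeral_3_eq_3)

declare Vgr.simps [simp del]
lemma Vgr_vals[simp]: "Vgr U17 = qmk 0 1" "Vgr V17 = qmk 2 1" "Vgr U20 = qmk 3 1" "Vgr V20 = qmk 1 1"
  "Vgr U21 = qmk 3 1" "Vgr V21 = qmk 1 1"
  by (simp_all add: Vgr.simps q8_unit qpow23)

lemma VA_grade: "VA h b c \<noteq> 0 \<Longrightarrow> Vgr c = qmul (qmul (qinv h) (Vgr b)) h"
proof -
  have "\<forall>h b c. VA h b c \<noteq> 0 \<longrightarrow> Vgr c = qmul (qmul (qinv h) (Vgr b)) h"
    unfolding q8_all vb_all by simp
  then show "VA h b c \<noteq> 0 \<Longrightarrow> Vgr c = qmul (qmul (qinv h) (Vgr b)) h" by blast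
qed


lemma VA_mult: "VA (qmul h h') i k = (\<Sum>j\<in>UNIV. VA h i j * VA h' j k)"
proof -
  have "\<forall>h h' i k. VA (qmul h h') i k = (\<Sum>j\<in>UNIV. VA h i j * VA h' j k)"
    unfolding q8_all vb_all sum_vb by simp
  then show ?thesis by blast
qed

lemma VA_e: "VA qe i k = (if i = k then 1 else 0)"
proof -
  have "\<forall>i k. VA qe i k = (if i = k then 1 else 0)"
    unfolding vb_all q8_unit by simp
  then show ?thesis by blast
qed


declare qmk_eq_iff[simp]

lemma mult_if_delta[simp]: "(if P then 1 else 0) * (y::complex) = (if P then y else 0)"
  "y * (if P then 1 else 0) = (if P then y else 0)" by simp_all

lemma qconj_iff: "(g = qmul (qmul h g') (qinv h)) = (g' = qmul (qmul (qinv h) g) h)"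
proof -
  have "\<forall>g h g'. (g = qmul (qmul h g') (qinv h)) = (g' = qmul (qmul (qinv h) g) h)"
    unfolding q8_all by simp
  then show ?thesis by blast
qed

lemma qinv_qe[simp]: "qinv qe = qe" by (simp add: q8_unit)

lemma grp_more: "qmul (qmul (qinv h) g) h = g \<longleftrightarrow> qmul g h = qmul h g"
  "qinv (qinv x) = x" "qinv (qmul x y) = qmul (qinv y) (qinv x)"
proof -
  have "\<forall>g h. (qmul (qmul (qinv h) g) h = g) = (qmul g h = qmul h g)"
    unfolding q8_all by simp
  then show "qmul (qmul (qinv h) g) h = g \<longleftrightarrow> qmul g h = qmul h g" by blast
  have "\<forall>x. qinv (qinv x) = x" unfolding q8_all by simp
  then show "qinv (qinv x) = x" by blast
  have "\<forall>x y. qinv (qmul x y) = qmul (qinv y) (qinv x)" unfolding q8_all by simp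
  then show "qinv (qmul x y) = qmul (qinv y) (qinv x)" by blast
qed

lemma sum_lmul: "(\<Sum>z\<in>UNIV. f (qmul w z)) = (\<Sum>z\<in>UNIV. (f z :: 'a :: comm_monoid_add))"
  by (rule sum.reindex_bij_witness[where i="\<lambda>z. qmul (qinv w) z" and j="\<lambda>z. qmul w z"])
     (auto simp: qmul_assoc[symmetric] grp_basic)

lemma sum_rmul: "(\<Sum>z\<in>UNIV. f (qmul z w)) = (\<Sum>z\<in>UNIV. (f z :: 'a :: comm_monoid_add))"
  by (rule sum.reindex_bij_witness[where i="\<lambda>z. qmul z (qinv w)" and j="\<lambda>z. qmul z w"])
     (auto simp: qmul_assoc grp_basic)

lemma sum_conj_delta:
  "(\<Sum>g'\<in>UNIV. if g = qmul (qmul h g') (qinv h) then (f g' :: 'a :: comm_monoid_add) else 0)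
     = f (qmul (qmul (qinv h) g) h)"
  unfolding qconj_iff by simp

definition vmul :: "'a set \<Rightarrow> 'c set \<Rightarrow> ('a \<Rightarrow> complex) \<Rightarrow> ('a \<Rightarrow> 'c \<Rightarrow> complex) \<Rightarrow> 'c \<Rightarrow> complex" where
  "vmul A C v M = (\<lambda>k. if k \<in> C then \<Sum>i\<in>A. v i * M i k else 0)"

definition dl :: "'a \<Rightarrow> 'a \<Rightarrow> complex" where "dl i = (\<lambda>j. if j = i then 1 else 0)"

lemma vmul_Vec[simp]: "vmul A C v M \<in> Vec C"
  by (simp add: vmul_def Vec_def)

lemma vmul_vmul: "vmul B C (vmul A B v M) N = vmul A C v (\<lambda>i k. \<Sum>j\<in>B. M i j * N j k)"
proof (rule ext)
  fix k
  show "vmul B C (vmul A B v M) N k = vmul A C v (\<lambda>i k. \<Sum>j\<in>B. M i j * N j k) k"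
  proof (cases "k \<in> C")
    case True
    have "(\<Sum>j\<in>B. vmul A B v M j * N j k) = (\<Sum>j\<in>B. \<Sum>i\<in>A. v i * M i j * N j k)"
      by (rule sum.cong) (auto simp: vmul_def sum_distrib_right)
    also have "\<dots> = (\<Sum>i\<in>A. \<Sum>j\<in>B. v i * M i j * N j k)" by (rule sum.swap)
    also have "\<dots> = (\<Sum>i\<in>A. v i * (\<Sum>j\<in>B. M i j * N j k))"
      by (simp add: sum_distrib_left mult.assoc)
    finally show ?thesis using True by (simp add: vmul_def)
  qed (simp add: vmul_def)
qed

lemma vmul_cong: "(\<And>i k. i \<in> A \<Longrightarrow> k \<in> C \<Longrightarrow> M i k = M' i k) \<Longrightarrow> (\<And>i. i \<in> A \<Longrightarrow> v i = v' i)
  \<Longrightarrow> vmul A C v M = vmul A C v' M'"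
  unfolding vmul_def by (intro ext) (auto intro!: sum.cong)

lemma vmul_lin: "vmul A C (\<lambda>i. \<Sum>l\<in>L. a l * f l i) M = (\<lambda>k. \<Sum>l\<in>L. a l * vmul A C (f l) M k)"
proof (rule ext)
  fix k
  show "vmul A C (\<lambda>i. \<Sum>l\<in>L. a l * f l i) M k = (\<Sum>l\<in>L. a l * vmul A C (f l) M k)"
  proof (cases "k \<in> C")
    case True
    have "(\<Sum>i\<in>A. (\<Sum>l\<in>L. a l * f l i) * M i k) = (\<Sum>i\<in>A. \<Sum>l\<in>L. a l * f l i * M i k)"
      by (simp add: sum_distrib_right)
    also have "\<dots> = (\<Sum>l\<in>L. \<Sum>i\<in>A. a l * f l i * M i k)" by (rule sum.swap)
    also have "\<dots> = (\<Sum>l\<in>L. a l * (\<Sum>i\<in>A. f l i * M i k))"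
      by (simp add: sum_distrib_left mult.assoc)
    finally show ?thesis using True by (simp add: vmul_def)
  qed (simp add: vmul_def)
qed

lemma vmul_add: "vmul A C (\<lambda>i. a * v i + w i) M = (\<lambda>k. a * vmul A C v M k + vmul A C w M k)"
  unfolding vmul_def
  by (intro ext) (simp add: sum.distrib sum_distrib_left algebra_simps)

lemma vmul_scale: "vmul A C (\<lambda>i. a * v i) M = (\<lambda>k. a * vmul A C v M k)"
  unfolding vmul_def
  by (intro ext) (simp add: sum_distrib_left algebra_simps)

lemma vmul_zero[simp]: "vmul A C (\<lambda>_. 0) M = (\<lambda>_. 0)"
  unfolding vmul_def by auto

lemma vec_decomp: "finite A \<Longrightarrow> v \<in> Vec A \<Longrightarrow> v = (\<lambda>j. \<Sum>i\<in>A. v i * dl i j)"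
  by (intro ext) (auto simp: dl_def Vec_def)

lemma vmul_dl: "finite A \<Longrightarrow> i \<in> A \<Longrightarrow> vmul A C (dl i) M = (\<lambda>k. if k \<in> C then M i k else 0)"
  unfolding vmul_def dl_def by (intro ext) simp

lemma Vec_eq:
  assumes "v \<in> Vec A" "w \<in> Vec A" "\<And>j. j \<in> A \<Longrightarrow> v j = w j" shows "v = w"
proof (rule ext)
  fix j show "v j = w j" using assms by (cases "j \<in> A") (auto simp: Vec_def)
qed

definition Rm :: "'b dact \<Rightarrow> q8 \<Rightarrow> 'b \<Rightarrow> 'b \<Rightarrow> complex" where
  "Rm act h i j = (\<Sum>g\<in>UNIV. act g h i j)"

definition rac :: "'b set \<Rightarrow> 'b dact \<Rightarrow> q8 \<Rightarrow> ('b \<Rightarrow> complex) \<Rightarrow> 'b \<Rightarrow> complex" where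
  "rac B act h v = vmul B B v (Rm act h)"

definition prj :: "'b set \<Rightarrow> 'b dact \<Rightarrow> q8 \<Rightarrow> ('b \<Rightarrow> complex) \<Rightarrow> 'b \<Rightarrow> complex" where
  "prj B act g v = vmul B B v (act g qe)"

lemma rac_Vec[simp]: "rac B act h v \<in> Vec B" by (simp add: rac_def)
lemma prj_Vec[simp]: "prj B act g v \<in> Vec B" by (simp add: prj_def)

context
  fixes B :: "'b set" and act :: "'b dact"
  assumes fin: "finite B" and modl: "is_module B act"
begin

lemma mod_mult: "i \<in> B \<Longrightarrow> k \<in> B \<Longrightarrow> (\<Sum>j\<in>B. act g h i j * act g' h' j k)
   = (if g = qmul (qmul h g') (qinv h) then act g (qmul h h') i k else 0)"
  using modl unfolding is_module_def by blast

lemma mod_unit: "i \<in> B \<Longrightarrow> k \<in> B \<Longrightarrow> (\<Sum>g\<in>UNIV. act g qe i k) = (if i = k then 1 else 0)"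
  using modl unfolding is_module_def by blast

lemma act_decomp: "i \<in> B \<Longrightarrow> k \<in> B \<Longrightarrow> (\<Sum>j\<in>B. act g qe i j * Rm act h j k) = act g h i k"
proof -
  assume ik: "i \<in> B" "k \<in> B"
  have "(\<Sum>j\<in>B. act g qe i j * Rm act h j k) = (\<Sum>j\<in>B. \<Sum>g'\<in>UNIV. act g qe i j * act g' h j k)"
    by (simp add: Rm_def sum_distrib_left)
  also have "\<dots> = (\<Sum>g'\<in>UNIV. \<Sum>j\<in>B. act g qe i j * act g' h j k)" by (rule sum.swap)
  also have "\<dots> = (\<Sum>g'\<in>UNIV. if g = g' then act g h i k else 0)"
    by (rule sum.cong) (simp_all add: mod_mult[OF ik] grp_basic)
  also have "\<dots> = act g h i k" by simp
  finally show ?thesis .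
qed

lemma vact_eq: "vact B act g h v = rac B act h (prj B act g v)"
proof -
  have "vact B act g h v = vmul B B v (act g h)" by (simp add: vact_def vmul_def)
  also have "\<dots> = vmul B B v (\<lambda>i k. \<Sum>j\<in>B. act g qe i j * Rm act h j k)"
    by (rule vmul_cong) (simp_all add: act_decomp)
  finally show ?thesis by (simp add: rac_def prj_def vmul_vmul)
qed

lemma Rm_mult: "i \<in> B \<Longrightarrow> k \<in> B \<Longrightarrow> (\<Sum>j\<in>B. Rm act h i j * Rm act h' j k) = Rm act (qmul h h') i k"
proof -
  assume ik: "i \<in> B" "k \<in> B"
  have "(\<Sum>j\<in>B. Rm act h i j * Rm act h' j k) = (\<Sum>j\<in>B. \<Sum>g\<in>UNIV. \<Sum>g'\<in>UNIV. act g h i j * act g' h' j k)"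
    by (simp add: Rm_def sum_product)
  also have "\<dots> = (\<Sum>g\<in>UNIV. \<Sum>j\<in>B. \<Sum>g'\<in>UNIV. act g h i j * act g' h' j k)" by (rule sum.swap)
  also have "\<dots> = (\<Sum>g\<in>UNIV. \<Sum>g'\<in>UNIV. \<Sum>j\<in>B. act g h i j * act g' h' j k)"
    by (rule sum.cong[OF refl], rule sum.swap)
  also have "\<dots> = (\<Sum>g\<in>UNIV. \<Sum>g'\<in>UNIV. if g = qmul (qmul h g') (qinv h) then act g (qmul h h') i k else 0)"
    by (simp add: mod_mult[OF ik])
  also have "\<dots> = Rm act (qmul h h') i k"
    by (simp only: sum_conj_delta Rm_def)
  finally show ?thesis .
qed

lemma rac_rac: "rac B act h' (rac B act h v) = rac B act (qmul h h') v"
  unfolding rac_def vmul_vmul by (rule vmul_cong) (simp_all add: Rm_mult)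

lemma rac_unit: "v \<in> Vec B \<Longrightarrow> rac B act qe v = v"
proof -
  assume v: "v \<in> Vec B"
  have "rac B act qe v = vmul B B v (\<lambda>i k. if i = k then 1 else 0)"
    unfolding rac_def by (rule vmul_cong) (simp_all add: Rm_def mod_unit)
  also have "\<dots> = v" using v fin
    by (intro ext) (auto simp: vmul_def Vec_def)
  finally show ?thesis .
qed

lemma rac_inv: "v \<in> Vec B \<Longrightarrow> rac B act (qinv h) (rac B act h v) = v"
  by (simp add: rac_rac grp_basic rac_unit)

lemma prj_prj: "prj B act g' (prj B act g v) = (if g = g' then prj B act g v else (\<lambda>_. 0))"
proof -
  have "prj B act g' (prj B act g v) = vmul B B v (\<lambda>i k. if g = g' then act g qe i k else 0)"
    unfolding prj_def vmul_vmul by (rule vmul_cong) (simp_all add: mod_mult grp_basic)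
  then show ?thesis by (auto simp: prj_def vmul_def)
qed

lemma prj_sum: "v \<in> Vec B \<Longrightarrow> (\<lambda>j. \<Sum>g\<in>UNIV. prj B act g v j) = v"
proof -
  assume v: "v \<in> Vec B"
  have "(\<lambda>j. \<Sum>g\<in>UNIV. prj B act g v j) = vmul B B v (Rm act qe)"
    unfolding prj_def Rm_def vmul_def by (auto simp: sum_distrib_left intro!: sum.swap)
  also have "\<dots> = v" using rac_unit[OF v] by (simp add: rac_def)
  finally show ?thesis .
qed

lemma prj_rac: "prj B act g (rac B act h v) = rac B act h (prj B act (qmul (qmul h g) (qinv h)) v)"
proof -
  have "prj B act g (rac B act h v) = vmul B B v (\<lambda>i k. \<Sum>j\<in>B. Rm act h i j * act g qe j k)"
    unfolding prj_def rac_def vmul_vmul ..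
  also have "\<dots> = vmul B B v (\<lambda>i k. \<Sum>j\<in>B. act (qmul (qmul h g) (qinv h)) qe i j * Rm act h j k)"
  proof (rule vmul_cong)
    fix i k assume ik: "i \<in> B" "k \<in> B"
    have "(\<Sum>j\<in>B. Rm act h i j * act g qe j k) = (\<Sum>g1\<in>UNIV. \<Sum>j\<in>B. act g1 h i j * act g qe j k)"
      unfolding Rm_def by (simp add: sum_distrib_right) (rule sum.swap)
    also have "\<dots> = (\<Sum>g1\<in>UNIV. if g1 = qmul (qmul h g) (qinv h) then act g1 (qmul h qe) i k else 0)"
      by (simp add: mod_mult[OF ik])
    also have "\<dots> = act (qmul (qmul h g) (qinv h)) h i k" by (simp add: grp_basic)
    finally show "(\<Sum>j\<in>B. Rm act h i j * act g qe j k) = (\<Sum>j\<in>B. act (qmul (qmul h g) (qinv h)) qe i j * Rm act h j k)"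
      by (simp add: act_decomp[OF ik])
  qed simp
  finally show ?thesis unfolding prj_def rac_def vmul_vmul .
qed

end

lemma rac_lin: "rac B act h (\<lambda>i. \<Sum>l\<in>L. a l * f l i) = (\<lambda>k. \<Sum>l\<in>L. a l * rac B act h (f l) k)"
  unfolding rac_def by (rule vmul_lin)
lemma prj_lin: "prj B act g (\<lambda>i. \<Sum>l\<in>L. a l * f l i) = (\<lambda>k. \<Sum>l\<in>L. a l * prj B act g (f l) k)"
  unfolding prj_def by (rule vmul_lin)
lemma rac_zero[simp]: "rac B act h (\<lambda>_. 0) = (\<lambda>_. 0)" by (simp add: rac_def)
lemma prj_zero[simp]: "prj B act h (\<lambda>_. 0) = (\<lambda>_. 0)" by (simp add: prj_def)


definition Pv :: "'b set \<Rightarrow> 'b dact \<Rightarrow> q8 \<Rightarrow> (q8 \<Rightarrow> complex) \<Rightarrow> ('b \<Rightarrow> complex) \<Rightarrow> 'b \<Rightarrow> complex" where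
  "Pv B act g0 c v = (\<lambda>j. \<Sum>z\<in>UNIV. c z * rac B act z (prj B act g0 v) j)"

lemma rac_out: "j \<notin> B \<Longrightarrow> rac B act h v j = 0"
  by (simp add: rac_def vmul_def)

lemma Pv_Vec[simp]: "Pv B act g0 c v \<in> Vec B"
  by (simp add: Pv_def Vec_def rac_out)

lemma Pv_lin: "Pv B act g0 c (\<lambda>i. \<Sum>l\<in>L. a l * f l i) = (\<lambda>j. \<Sum>l\<in>L. a l * Pv B act g0 c (f l) j)"
proof (rule ext)
  fix j
  have "Pv B act g0 c (\<lambda>i. \<Sum>l\<in>L. a l * f l i) j
      = (\<Sum>z\<in>UNIV. c z * (\<Sum>l\<in>L. a l * rac B act z (prj B act g0 (f l)) j))"
    unfolding Pv_def prj_lin rac_lin ..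
  also have "\<dots> = (\<Sum>z\<in>UNIV. \<Sum>l\<in>L. a l * (c z * rac B act z (prj B act g0 (f l)) j))"
    by (simp add: sum_distrib_left algebra_simps)
  also have "\<dots> = (\<Sum>l\<in>L. \<Sum>z\<in>UNIV. a l * (c z * rac B act z (prj B act g0 (f l)) j))"
    by (rule sum.swap)
  also have "\<dots> = (\<Sum>l\<in>L. a l * Pv B act g0 c (f l) j)"
    by (simp add: Pv_def sum_distrib_left)
  finally show "Pv B act g0 c (\<lambda>i. \<Sum>l\<in>L. a l * f l i) j = (\<Sum>l\<in>L. a l * Pv B act g0 c (f l) j)" .
qed

lemma qinv_cancel: "qmul (qinv w) (qmul w z) = z" "qmul w (qmul (qinv w) z) = z"
  by (simp_all add: qmul_assoc[symmetric] grp_basic)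

lemma conj_comm: "qmul (qmul k g0) (qinv k) = g0 \<longleftrightarrow> qmul k g0 = qmul g0 k"
proof -
  have "\<forall>k g0. (qmul (qmul k g0) (qinv k) = g0) = (qmul k g0 = qmul g0 k)" unfolding q8_all by simp
  then show ?thesis by blast
qed

lemma conj_comm2: "qmul k g0 = qmul g0 k \<Longrightarrow> (g0 = qmul (qmul k g) (qinv k)) = (g = g0)"
proof -
  have "\<forall>k g0 g. qmul k g0 = qmul g0 k \<longrightarrow> (g0 = qmul (qmul k g) (qinv k)) = (g = g0)" unfolding q8_all by simp
  then show "qmul k g0 = qmul g0 k \<Longrightarrow> (g0 = qmul (qmul k g) (qinv k)) = (g = g0)" by blast
qed

context
  fixes B :: "'b set" and act :: "'b dact" and g0 :: q8 and c :: "q8 \<Rightarrow> complex"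
  assumes fin: "finite B" and modl: "is_module B act"
  and H1: "\<forall>z. c z \<noteq> 0 \<longrightarrow> qmul z g0 = qmul g0 z"
begin

lemma Pv_prj: "Pv B act g0 c (prj B act g v) = (if g = g0 then Pv B act g0 c v else (\<lambda>_. 0))"
  unfolding Pv_def prj_prj[OF fin modl] by (auto simp: Pv_def)

lemma prj_Pv: "prj B act g (Pv B act g0 c v) = (if g = g0 then Pv B act g0 c v else (\<lambda>_. 0))"
proof -
  have "prj B act g (Pv B act g0 c v) = (\<lambda>k. \<Sum>z\<in>UNIV. c z * prj B act g (rac B act z (prj B act g0 v)) k)"
    unfolding Pv_def prj_lin ..
  also have "\<dots> = (\<lambda>k. \<Sum>z\<in>UNIV. if g = g0 then c z * rac B act z (prj B act g0 v) k else 0)"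
  proof (intro ext sum.cong refl)
    fix k z
    show "c z * prj B act g (rac B act z (prj B act g0 v)) k = (if g = g0 then c z * rac B act z (prj B act g0 v) k else 0)"
    proof (cases "c z = 0")
      case False
      then have cm: "qmul z g0 = qmul g0 z" using H1 by blast
      show ?thesis unfolding prj_rac[OF fin modl] prj_prj[OF fin modl] conj_comm2[OF cm]
        by (auto simp: eq_commute[of g g0])
    qed simp
  qed
  finally show ?thesis by (auto simp: Pv_def)
qed

lemma Pv_fix_prj: "Pv B act g0 c x = x \<Longrightarrow> prj B act g x = (if g = g0 then x else (\<lambda>_. 0))"
  using prj_Pv[of g x] by simp

lemma L_conv:
  assumes cm: "qmul k g0 = qmul g0 k"
  and NUM: "\<And>y. (\<Sum>z'\<in>UNIV. c z' * c (qmul (qinv (qmul z' k)) y)) = \<tau> * c y"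
  shows "(\<lambda>j. \<Sum>z\<in>UNIV. c z * rac B act z (\<lambda>j'. \<Sum>z'\<in>UNIV. c z' * rac B act (qmul z' k) p j') j)
       = (\<lambda>j. \<tau> * (\<Sum>y\<in>UNIV. c y * rac B act y p j))"
proof (rule ext)
  fix j
  have "(\<Sum>z\<in>UNIV. c z * rac B act z (\<lambda>j'. \<Sum>z'\<in>UNIV. c z' * rac B act (qmul z' k) p j') j)
      = (\<Sum>z\<in>UNIV. c z * (\<Sum>z'\<in>UNIV. c z' * rac B act (qmul (qmul z' k) z) p j))"
    unfolding rac_lin rac_rac[OF fin modl] ..
  also have "\<dots> = (\<Sum>z\<in>UNIV. \<Sum>z'\<in>UNIV. c z * (c z' * rac B act (qmul (qmul z' k) z) p j))"
    by (simp add: sum_distrib_left)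
  also have "\<dots> = (\<Sum>z'\<in>UNIV. \<Sum>z\<in>UNIV. c z * (c z' * rac B act (qmul (qmul z' k) z) p j))"
    by (rule sum.swap)
  also have "\<dots> = (\<Sum>z'\<in>UNIV. c z' * (\<Sum>z\<in>UNIV. c z * rac B act (qmul (qmul z' k) z) p j))"
    by (simp add: sum_distrib_left algebra_simps)
  also have "\<dots> = (\<Sum>z'\<in>UNIV. c z' * (\<Sum>y\<in>UNIV. c (qmul (qinv (qmul z' k)) y) * rac B act y p j))"
  proof (rule sum.cong[OF refl])
    fix z'
    let ?w = "qmul z' k"
    have "(\<Sum>y\<in>UNIV. c (qmul (qinv ?w) y) * rac B act y p j)
        = (\<Sum>z\<in>UNIV. c (qmul (qinv ?w) (qmul ?w z)) * rac B act (qmul ?w z) p j)"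
      by (rule sum_lmul[symmetric])
    also have "\<dots> = (\<Sum>z\<in>UNIV. c z * rac B act (qmul ?w z) p j)"
      by (simp only: qinv_cancel)
    finally show "c z' * (\<Sum>z\<in>UNIV. c z * rac B act (qmul (qmul z' k) z) p j) =
         c z' * (\<Sum>y\<in>UNIV. c (qmul (qinv (qmul z' k)) y) * rac B act y p j)" by simp
  qed
  also have "\<dots> = (\<Sum>y\<in>UNIV. (\<Sum>z'\<in>UNIV. c z' * c (qmul (qinv (qmul z' k)) y)) * rac B act y p j)"
    by (simp add: sum_distrib_left sum_distrib_right algebra_simps) (rule sum.swap)
  also have "\<dots> = \<tau> * (\<Sum>y\<in>UNIV. c y * rac B act y p j)"
    by (simp add: NUM sum_distrib_left algebra_simps)
  finally show "(\<Sum>z\<in>UNIV. c z * rac B act z (\<lambda>j'. \<Sum>z'\<in>UNIV. c z' * rac B act (qmul z' k) p j') j)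
       = \<tau> * (\<Sum>y\<in>UNIV. c y * rac B act y p j)" .
qed

lemma sandwich:
  assumes NUM: "\<And>k y. qmul k g0 = qmul g0 k \<Longrightarrow> (\<Sum>z'\<in>UNIV. c z' * c (qmul (qinv (qmul z' k)) y)) = \<tau> k * c y"
  and H0: "\<And>k. qmul k g0 \<noteq> qmul g0 k \<Longrightarrow> \<tau> k = 0"
  and x: "Pv B act g0 c x = x"
  shows "Pv B act g0 c (rac B act k x) = (\<lambda>j. \<tau> k * x j)"
proof -
  have xg: "prj B act g0 x = x" using Pv_fix_prj[OF x] by simp
  have xe: "x = (\<lambda>j. \<Sum>z'\<in>UNIV. c z' * rac B act z' x j)"
    using x unfolding Pv_def xg by simp
  have pr: "prj B act g0 (rac B act k x) = (if qmul k g0 = qmul g0 k then rac B act k x else (\<lambda>_. 0))"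
    unfolding prj_rac[OF fin modl] Pv_fix_prj[OF x] conj_comm by simp
  show ?thesis
  proof (cases "qmul k g0 = qmul g0 k")
    case False
    then show ?thesis using H0[OF False] unfolding Pv_def pr by simp
  next
    case True
    have rk: "rac B act k x = (\<lambda>j'. \<Sum>z'\<in>UNIV. c z' * rac B act (qmul z' k) x j')"
      by (subst xe) (simp only: rac_lin rac_rac[OF fin modl])
    have "Pv B act g0 c (rac B act k x) = (\<lambda>j. \<Sum>z\<in>UNIV. c z * rac B act z (rac B act k x) j)"
      unfolding Pv_def pr using True by simp
    also have "\<dots> = (\<lambda>j. \<tau> k * (\<Sum>y\<in>UNIV. c y * rac B act y x j))"
      unfolding rk by (rule L_conv[OF True NUM[OF True]])
    also have "\<dots> = (\<lambda>j. \<tau> k * x j)" by (subst (2) xe) simp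
    finally show ?thesis .
  qed
qed

lemma Pv_idem:
  assumes NUM: "\<And>y. (\<Sum>z'\<in>UNIV. c z' * c (qmul (qinv (qmul z' qe)) y)) = 1 * c y"
  shows "Pv B act g0 c (Pv B act g0 c v) = Pv B act g0 c v"
proof -
  have e: "qmul qe g0 = qmul g0 qe" by (simp add: grp_basic)
  have "Pv B act g0 c (Pv B act g0 c v) = (\<lambda>j. \<Sum>z\<in>UNIV. c z * rac B act z (Pv B act g0 c v) j)"
    unfolding Pv_def[of B act g0 c "Pv B act g0 c v"] prj_Pv by simp
  also have "\<dots> = (\<lambda>j. \<Sum>z\<in>UNIV. c z * rac B act z (\<lambda>j'. \<Sum>z'\<in>UNIV. c z' * rac B act (qmul z' qe) (prj B act g0 v) j') j)"
    by (simp add: Pv_def grp_basic)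
  also have "\<dots> = (\<lambda>j. 1 * (\<Sum>y\<in>UNIV. c y * rac B act y (prj B act g0 v) j))"
    by (rule L_conv[OF e NUM])
  finally show ?thesis by (simp add: Pv_def)
qed

end


lemma grp_c2: "qmul (qmul (qinv h) (qmul (qmul h g) (qinv h))) (qinv (qinv h)) = g"
  "qmul h' (qinv (qmul h h')) = qinv h"
proof -
  have "\<forall>h g. qmul (qmul (qinv h) (qmul (qmul h g) (qinv h))) (qinv (qinv h)) = g" unfolding q8_all by simp
  then show "qmul (qmul (qinv h) (qmul (qmul h g) (qinv h))) (qinv (qinv h)) = g" by blast
  have "\<forall>h h'. qmul h' (qinv (qmul h h')) = qinv h" unfolding q8_all by simp
  then show "qmul h' (qinv (qmul h h')) = qinv h" by blast
qed

lemma hom_of: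
  assumes finB: "finite B" and finC: "finite C"
  and vm: "\<And>v. v \<in> Vec B \<Longrightarrow> vmul B C v F = \<Phi> v"
  and tw: "\<And>v g h. v \<in> Vec B \<Longrightarrow> \<Phi> (vact B act g h v) = vact C act' g h (\<Phi> v)"
  shows "module_hom B act C act' F"
  unfolding module_hom_def
proof (intro allI ballI)
  fix g h i k assume i: "i \<in> B" and k: "k \<in> C"
  have dV: "dl i \<in> Vec B" using i by (simp add: Vec_def dl_def)
  have vd: "vact B act g h (dl i) = (\<lambda>j. if j \<in> B then act g h i j else 0)"
    unfolding vact_def dl_def using finB i by (intro ext) simp
  have vdV: "vact B act g h (dl i) \<in> Vec B" by (simp add: vd Vec_def)
  have "(\<Sum>j\<in>C. F i j * act' g h j k) = vact C act' g h (\<Phi> (dl i)) k"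
    using k unfolding vm[OF dV, symmetric] vmul_dl[OF finB i] vact_def
    by (auto intro!: sum.cong)
  also have "\<dots> = \<Phi> (vact B act g h (dl i)) k" by (simp add: tw[OF dV])
  also have "\<dots> = vmul B C (vact B act g h (dl i)) F k" by (simp add: vm[OF vdV])
  also have "\<dots> = (\<Sum>j\<in>B. act g h i j * F j k)"
    using k unfolding vd vmul_def by (auto intro!: sum.cong)
  finally show "(\<Sum>j\<in>C. F i j * act' g h j k) = (\<Sum>j\<in>B. act g h i j * F j k)" .
qed

lemma rac_add: "rac B act h (\<lambda>i. a * x i + y i) = (\<lambda>k. a * rac B act h x k + rac B act h y k)"
  unfolding rac_def by (rule vmul_add)
lemma prj_add: "prj B act h (\<lambda>i. a * x i + y i) = (\<lambda>k. a * prj B act h x k + prj B act h y k)"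
  unfolding prj_def by (rule vmul_add)
lemma Pv_add: "Pv B act g0 c (\<lambda>i. a * x i + y i) = (\<lambda>k. a * Pv B act g0 c x k + Pv B act g0 c y k)"
  unfolding Pv_def prj_add rac_add by (simp add: sum.distrib sum_distrib_left algebra_simps)
lemma vact_scale: "vact B act g h (\<lambda>i. a * x i) = (\<lambda>k. a * vact B act g h x k)"
  unfolding vact_def by (auto simp: sum_distrib_left algebra_simps)

context
  fixes B :: "'b set" and act :: "'b dact" and C :: "'c set" and act' :: "'c dact"
    and g0 :: q8 and c :: "q8 \<Rightarrow> complex" and u :: "'c \<Rightarrow> complex" and b0 :: 'b
  assumes finB: "finite B" and modB: "is_module B act"
  and finC: "finite C" and modC: "is_module C act'"
  and H1: "\<forall>z. c z \<noteq> 0 \<longrightarrow> qmul z g0 = qmul g0 z"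
  and uP: "Pv C act' g0 c u = u"
begin

abbreviation "LF h v \<equiv> Pv B act g0 c (rac B act (qinv h) v) b0"

lemma LF_lin: "v \<in> Vec B \<Longrightarrow> LF h v = (\<Sum>i\<in>B. v i * LF h (dl i))"
proof -
  assume v: "v \<in> Vec B"
  have "LF h v = Pv B act g0 c (rac B act (qinv h) (\<lambda>j. \<Sum>i\<in>B. v i * dl i j)) b0"
    using vec_decomp[OF finB v] by simp
  also have "\<dots> = (\<Sum>i\<in>B. v i * LF h (dl i))"
    unfolding rac_lin Pv_lin ..
  finally show ?thesis .
qed

lemma F_vmul: "v \<in> Vec B \<Longrightarrow> vmul B C v (\<lambda>i k. \<Sum>h\<in>UNIV. LF h (dl i) * rac C act' h u k)
   = (\<lambda>k. \<Sum>h\<in>UNIV. LF h v * rac C act' h u k)"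
proof (rule ext)
  fix k assume v: "v \<in> Vec B"
  show "vmul B C v (\<lambda>i k. \<Sum>h\<in>UNIV. LF h (dl i) * rac C act' h u k) k = (\<Sum>h\<in>UNIV. LF h v * rac C act' h u k)"
  proof (cases "k \<in> C")
    case True
    have "(\<Sum>i\<in>B. v i * (\<Sum>h\<in>UNIV. LF h (dl i) * rac C act' h u k)) = (\<Sum>h\<in>UNIV. \<Sum>i\<in>B. v i * (LF h (dl i) * rac C act' h u k))"
      by (simp add: sum_distrib_left) (rule sum.swap)
    also have "\<dots> = (\<Sum>h\<in>UNIV. LF h v * rac C act' h u k)"
      by (simp add: LF_lin[OF v] sum_distrib_left sum_distrib_right mult.left_commute mult.commute)
    finally show ?thesis using True by (simp add: vmul_def)
  qed (simp add: vmul_def rac_out)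
qed

lemma PhiF_rac: "(\<lambda>k. \<Sum>h\<in>UNIV. LF h (rac B act h' v) * rac C act' h u k)
   = rac C act' h' (\<lambda>k. \<Sum>h\<in>UNIV. LF h v * rac C act' h u k)"
proof -
  have "(\<lambda>k. \<Sum>h\<in>UNIV. LF h (rac B act h' v) * rac C act' h u k)
      = (\<lambda>k. \<Sum>h\<in>UNIV. Pv B act g0 c (rac B act (qmul h' (qinv h)) v) b0 * rac C act' h u k)"
    by (simp add: rac_rac[OF finB modB])
  also have "\<dots> = (\<lambda>k. \<Sum>h\<in>UNIV. Pv B act g0 c (rac B act (qmul h' (qinv (qmul h h'))) v) b0 * rac C act' (qmul h h') u k)"
    by (intro ext) (rule sum_rmul[symmetric])
  also have "\<dots> = (\<lambda>k. \<Sum>h\<in>UNIV. LF h v * rac C act' h' (rac C act' h u) k)"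
    by (simp add: grp_c2 rac_rac[OF finC modC])
  also have "\<dots> = rac C act' h' (\<lambda>k. \<Sum>h\<in>UNIV. LF h v * rac C act' h u k)"
    unfolding rac_lin ..
  finally show ?thesis .
qed

lemma PhiF_prj: "(\<lambda>k. \<Sum>h\<in>UNIV. LF h (prj B act g v) * rac C act' h u k)
   = prj C act' g (\<lambda>k. \<Sum>h\<in>UNIV. LF h v * rac C act' h u k)"
proof -
  have LFp: "LF h (prj B act g v) = (if qmul (qmul h g) (qinv h) = g0 then LF h v else 0)" for h
  proof -
    have "rac B act (qinv h) (prj B act g v) = prj B act (qmul (qmul h g) (qinv h)) (rac B act (qinv h) v)"
      unfolding prj_rac[OF finB modB] grp_c2 ..
    then show ?thesis by (simp add: Pv_prj[OF finB modB H1])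
  qed
  have pu: "prj C act' g (rac C act' h u) = (if qmul (qmul h g) (qinv h) = g0 then rac C act' h u else (\<lambda>_. 0))" for h
    unfolding prj_rac[OF finC modC] Pv_fix_prj[OF finC modC H1 uP] by simp
  show ?thesis unfolding prj_lin pu LFp
    by (intro ext sum.cong refl) auto
qed

lemma PhiF_add: "(\<lambda>k. \<Sum>h\<in>UNIV. LF h (\<lambda>i. a * x i + y i) * rac C act' h u k)
  = (\<lambda>k. a * (\<Sum>h\<in>UNIV. LF h x * rac C act' h u k) + (\<Sum>h\<in>UNIV. LF h y * rac C act' h u k))"
  unfolding rac_add Pv_add by (simp add: sum.distrib sum_distrib_left algebra_simps)

lemma PhiF_vact: "(\<lambda>k. \<Sum>h\<in>UNIV. LF h (vact B act g h' v) * rac C act' h u k) =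
         vact C act' g h' (\<lambda>k. \<Sum>h\<in>UNIV. LF h v * rac C act' h u k)"
  unfolding vact_eq[OF finB modB] vact_eq[OF finC modC] PhiF_rac PhiF_prj ..

lemma F_hom: "module_hom B act C act' (\<lambda>i k. \<Sum>h\<in>UNIV. LF h (dl i) * rac C act' h u k)"
proof (rule hom_of[OF finB finC F_vmul])
  fix v g h assume v: "v \<in> Vec B"
  show "(\<lambda>k. \<Sum>ha\<in>UNIV. LF ha (vact B act g h v) * rac C act' ha u k) =
         vact C act' g h (\<lambda>k. \<Sum>h\<in>UNIV. LF h v * rac C act' h u k)"
    unfolding vact_eq[OF finB modB] vact_eq[OF finC modC] PhiF_rac PhiF_prj ..
qed

end


lemma hom_scale: "module_hom B act C act' F \<Longrightarrow> module_hom B act C act' (\<lambda>i k. F i k / a)"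
  unfolding module_hom_def
  by (simp add: sum_divide_distrib[symmetric] mult.commute[of _ "F _ _ / a"] times_divide_eq_left
      flip: mult.assoc)

lemma Pv_zero[simp]: "Pv B act g0 c (\<lambda>_. 0) = (\<lambda>_. 0)"
  by (simp add: Pv_def)

definition PF :: "'b set \<Rightarrow> 'b dact \<Rightarrow> 'c set \<Rightarrow> 'c dact \<Rightarrow> q8 \<Rightarrow> (q8 \<Rightarrow> complex) \<Rightarrow> ('c \<Rightarrow> complex) \<Rightarrow> 'b \<Rightarrow> ('b \<Rightarrow> complex) \<Rightarrow> 'c \<Rightarrow> complex" where
  "PF B act C act' g0 c u b0 v = (\<lambda>k. \<Sum>h\<in>UNIV. Pv B act g0 c (rac B act (qinv h) v) b0 * rac C act' h u k)"

lemma PF_sum: "PF B act C act' g0 c u b0 (\<lambda>j. \<Sum>z\<in>UNIV. a z * f z j) = (\<lambda>k. \<Sum>z\<in>UNIV. a z * PF B act C act' g0 c u b0 (f z) k)"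
proof (rule ext)
  fix k
  have "PF B act C act' g0 c u b0 (\<lambda>j. \<Sum>z\<in>UNIV. a z * f z j) k
     = (\<Sum>h\<in>UNIV. (\<Sum>z\<in>UNIV. a z * Pv B act g0 c (rac B act (qinv h) (f z)) b0) * rac C act' h u k)"
    unfolding PF_def rac_lin Pv_lin ..
  also have "\<dots> = (\<Sum>h\<in>UNIV. \<Sum>z\<in>UNIV. a z * (Pv B act g0 c (rac B act (qinv h) (f z)) b0 * rac C act' h u k))"
    by (simp add: sum_distrib_right mult.assoc)
  also have "\<dots> = (\<Sum>z\<in>UNIV. \<Sum>h\<in>UNIV. a z * (Pv B act g0 c (rac B act (qinv h) (f z)) b0 * rac C act' h u k))"
    by (rule sum.swap)
  also have "\<dots> = (\<Sum>z\<in>UNIV. a z * PF B act C act' g0 c u b0 (f z) k)" by (simp add: sum_distrib_left PF_def)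
  finally show "PF B act C act' g0 c u b0 (\<lambda>j. \<Sum>z\<in>UNIV. a z * f z j) k = (\<Sum>z\<in>UNIV. a z * PF B act C act' g0 c u b0 (f z) k)" .
qed

context
  fixes B :: "'b set" and act :: "'b dact" and C :: "'c set" and act' :: "'c dact"
    and g0 :: q8 and c :: "q8 \<Rightarrow> complex" and u :: "'c \<Rightarrow> complex" and b0 :: 'b
  assumes finB: "finite B" and modB: "is_module B act"
  and finC: "finite C" and modC: "is_module C act'"
  and H1: "\<forall>z. c z \<noteq> 0 \<longrightarrow> qmul z g0 = qmul g0 z"
  and uP: "Pv C act' g0 c u = u"
begin
lemma PF_rac: "PF B act C act' g0 c u b0 (rac B act h v) = rac C act' h (PF B act C act' g0 c u b0 v)"
  unfolding PF_def by (rule PhiF_rac[OF finB modB finC modC H1 uP])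
lemma PF_prj: "PF B act C act' g0 c u b0 (prj B act g v) = prj C act' g (PF B act C act' g0 c u b0 v)"
  unfolding PF_def by (rule PhiF_prj[OF finB modB finC modC H1 uP])
lemma PF_vact: "PF B act C act' g0 c u b0 (vact B act g h v) = vact C act' g h (PF B act C act' g0 c u b0 v)"
  unfolding PF_def by (rule PhiF_vact[OF finB modB finC modC H1 uP])
lemma PF_add: "PF B act C act' g0 c u b0 (\<lambda>i. a * x i + y i) = (\<lambda>k. a * PF B act C act' g0 c u b0 x k + PF B act C act' g0 c u b0 y k)"
  unfolding PF_def by (rule PhiF_add[OF finB modB finC modC H1 uP])
lemma PF_vmul: "v \<in> Vec B \<Longrightarrow> vmul B C v (\<lambda>i k. \<Sum>h\<in>UNIV. Pv B act g0 c (rac B act (qinv h) (dl i)) b0 * rac C act' h u k) = PF B act C act' g0 c u b0 v"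
  unfolding PF_def by (rule F_vmul[OF finB modB finC modC H1 uP])
lemma PF_Vec: "PF B act C act' g0 c u b0 v \<in> Vec C"
  by (simp add: PF_def Vec_def rac_out)
end

context
  fixes B :: "'b set" and act :: "'b dact" and C :: "'c set" and act' :: "'c dact"
    and g0 :: q8 and c :: "q8 \<Rightarrow> complex" and \<tau> :: "q8 \<Rightarrow> complex"
    and w :: "'b \<Rightarrow> complex" and u :: "'c \<Rightarrow> complex" and b0 :: 'b and t0 :: 'c
  assumes finB: "finite B" and modB: "is_module B act" and simB: "simple_module B act"
  and finC: "finite C" and modC: "is_module C act'"
  and H1: "\<forall>z. c z \<noteq> 0 \<longrightarrow> qmul z g0 = qmul g0 z"
  and NUM: "\<And>k y. qmul k g0 = qmul g0 k \<Longrightarrow> (\<Sum>z'\<in>UNIV. c z' * c (qmul (qinv (qmul z' k)) y)) = \<tau> k * c y"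
  and H0: "\<And>k. qmul k g0 \<noteq> qmul g0 k \<Longrightarrow> \<tau> k = 0"
  and Knz: "(\<Sum>k\<in>UNIV. \<Sum>h\<in>UNIV. \<tau> (qinv h) * \<tau> (qmul h (qinv k)) * \<tau> k) \<noteq> 0"
  and wP: "Pv B act g0 c w = w" and b0: "b0 \<in> B" and wb0: "w b0 \<noteq> 0"
  and uP: "Pv C act' g0 c u = u" and t0: "t0 \<in> C" and ut0: "u t0 \<noteq> 0"
begin

abbreviation "F1 \<equiv> PF B act C act' g0 c u b0"
abbreviation "G1 \<equiv> PF C act' B act g0 c w t0"

lemma sandB: "Pv B act g0 c (rac B act k w) = (\<lambda>j. \<tau> k * w j)"
  by (rule sandwich[OF finB modB H1, where \<tau>=\<tau>]) (simp_all add: NUM H0 wP)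
lemma sandC: "Pv C act' g0 c (rac C act' k u) = (\<lambda>j. \<tau> k * u j)"
  by (rule sandwich[OF finC modC H1, where \<tau>=\<tau>]) (simp_all add: NUM H0 uP)

lemmas F1_rac = PF_rac[OF finB modB finC modC H1 uP]
lemmas G1_rac = PF_rac[OF finC modC finB modB H1 wP]
lemmas F1_prj = PF_prj[OF finB modB finC modC H1 uP]
lemmas G1_prj = PF_prj[OF finC modC finB modB H1 wP]

lemma Th_w0: "G1 (F1 w) = (\<lambda>i. \<Sum>k\<in>UNIV. (\<Sum>h\<in>UNIV. (\<tau> (qinv h) * w b0) * (\<tau> (qmul h (qinv k)) * u t0)) * rac B act k w i)"
proof -
  have pf: "F1 w = (\<lambda>k. \<Sum>h\<in>UNIV. (\<tau> (qinv h) * w b0) * rac C act' h u k)"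
    by (simp add: sandB PF_def)
  show ?thesis unfolding pf PF_def[of C act' B act g0 c w t0] rac_lin rac_rac[OF finC modC] Pv_lin sandC
    by (simp add: sum_distrib_right ac_simps)
qed

lemma Th_Pv: "G1 (F1 (Pv B act g0 c v)) = Pv B act g0 c (G1 (F1 v))"
proof -
  have e: "Pv B act g0 c v = (\<lambda>j. \<Sum>z\<in>UNIV. c z * rac B act z (prj B act g0 v) j)"
    by (simp only: Pv_def)
  have "G1 (F1 (Pv B act g0 c v)) = (\<lambda>k. \<Sum>z\<in>UNIV. c z * G1 (F1 (rac B act z (prj B act g0 v))) k)"
    by (subst e) (simp only: PF_sum)
  also have "\<dots> = (\<lambda>k. \<Sum>z\<in>UNIV. c z * rac B act z (prj B act g0 (G1 (F1 v))) k)"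
    by (simp only: F1_rac G1_rac F1_prj G1_prj)
  finally show ?thesis by (simp add: Pv_def)
qed

definition "kap = w b0 * u t0 * (\<Sum>k\<in>UNIV. \<Sum>h\<in>UNIV. \<tau> (qinv h) * \<tau> (qmul h (qinv k)) * \<tau> k)"

lemma kap_nz: "kap \<noteq> 0" using wb0 ut0 Knz by (simp add: kap_def)

lemma Th_w: "G1 (F1 w) = (\<lambda>j. kap * w j)"
proof -
  have "G1 (F1 w) = G1 (F1 (Pv B act g0 c w))" using wP by simp
  also have "\<dots> = Pv B act g0 c (G1 (F1 w))" by (rule Th_Pv)
  also have "\<dots> = (\<lambda>j. \<Sum>k\<in>UNIV. (\<Sum>h\<in>UNIV. (\<tau> (qinv h) * w b0) * (\<tau> (qmul h (qinv k)) * u t0)) * (\<tau> k * w j))"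
    unfolding Th_w0 Pv_lin sandB ..
  also have "\<dots> = (\<lambda>j. kap * w j)"
    unfolding kap_def
    by (intro ext) (simp add: sum_distrib_left sum_distrib_right ac_simps)
  finally show ?thesis .
qed

lemma Th_add: "G1 (F1 (\<lambda>i. a * x i + y i)) = (\<lambda>k. a * G1 (F1 x) k + G1 (F1 y) k)"
  unfolding PF_add[OF finB modB finC modC H1 uP] PF_add[OF finC modC finB modB H1 wP] ..

lemma Th_vact: "G1 (F1 (vact B act g h v)) = vact B act g h (G1 (F1 v))"
  unfolding PF_vact[OF finB modB finC modC H1 uP] PF_vact[OF finC modC finB modB H1 wP] ..

lemma Th_zero: "G1 (F1 (\<lambda>_. 0)) = (\<lambda>_. 0)"
  by (simp add: PF_def)

lemma U_all: "v \<in> Vec B \<Longrightarrow> G1 (F1 v) = (\<lambda>j. kap * v j)"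
proof -
  let ?U = "{v \<in> Vec B. G1 (F1 v) = (\<lambda>j. kap * v j)}"
  have sub: "submodule B act ?U"
    unfolding submodule_def csubspace_def
  proof (intro conjI ballI allI)
    show "?U \<subseteq> Vec B" by blast
    show "(\<lambda>_. 0) \<in> ?U" by (simp add: Th_zero Vec_def)
    fix x y assume x: "x \<in> ?U" and y: "y \<in> ?U"
    have "G1 (F1 (\<lambda>p. x p + y p)) = (\<lambda>k. G1 (F1 x) k + G1 (F1 y) k)" using Th_add[of 1 x y] by simp
    then show "(\<lambda>p. x p + y p) \<in> ?U" using x y by (auto simp: Vec_def algebra_simps)
  next
    fix a x assume x: "x \<in> ?U"
    have "G1 (F1 (\<lambda>p. a * x p)) = (\<lambda>k. a * G1 (F1 x) k + G1 (F1 (\<lambda>_. 0)) k)" using Th_add[of a x "\<lambda>_. 0"] by simp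
    also have "\<dots> = (\<lambda>k. a * G1 (F1 x) k)" by (simp add: Th_zero)
    finally show "(\<lambda>p. a * x p) \<in> ?U" using x by (auto simp: Vec_def algebra_simps)
  next
    fix v g h assume v: "v \<in> ?U"
    have "vact B act g h v \<in> Vec B" by (simp add: vact_def Vec_def)
    moreover have "G1 (F1 (vact B act g h v)) = (\<lambda>j. kap * vact B act g h v j)"
      using v by (simp add: Th_vact vact_scale)
    ultimately show "vact B act g h v \<in> ?U" by blast
  qed
  have wU: "w \<in> ?U" using Th_w wP Pv_Vec[of B act g0 c w] by simp
  have "?U \<noteq> {\<lambda>_. 0}"
  proof
    assume "?U = {\<lambda>_. 0}"
    then have "w = (\<lambda>_. 0)" using wU by blast
    then show False using wb0 by simp
  qed
  moreover have "?U = {\<lambda>_. 0} \<or> ?U = Vec B" using simB sub unfolding simple_module_def by blast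
  ultimately have "?U = Vec B" by blast
  then show "v \<in> Vec B \<Longrightarrow> G1 (F1 v) = (\<lambda>j. kap * v j)" by blast
qed

theorem core_summand: "direct_summand B act C act'"
proof -
  let ?F = "\<lambda>i k. \<Sum>h\<in>UNIV. Pv B act g0 c (rac B act (qinv h) (dl i)) b0 * rac C act' h u k"
  let ?G = "\<lambda>k i. \<Sum>h\<in>UNIV. Pv C act' g0 c (rac C act' (qinv h) (dl k)) t0 * rac B act h w i"
  have Fh: "module_hom B act C act' ?F" by (rule F_hom[OF finB modB finC modC H1 uP])
  have Gh: "module_hom C act' B act ?G" by (rule F_hom[OF finC modC finB modB H1 wP])
  have G'h: "module_hom C act' B act (\<lambda>k i. ?G k i / kap)" by (rule hom_scale[OF Gh])
  have id: "(\<Sum>j\<in>C. ?F i j * (?G j k / kap)) = (if i = k then 1 else 0)" if i: "i \<in> B" and k: "k \<in> B" for i k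
  proof -
    have dV: "dl i \<in> Vec B" using i by (simp add: Vec_def dl_def)
    have pf: "F1 (dl i) = (\<lambda>k. if k \<in> C then ?F i k else 0)"
      proof -
      have "F1 (dl i) = vmul B C (dl i) ?F" using PF_vmul[OF finB modB finC modC H1 uP dV] by simp
      also have "\<dots> = (\<lambda>k. if k \<in> C then ?F i k else 0)" by (rule vmul_dl[OF finB i])
      finally show ?thesis .
    qed
    have pfV: "F1 (dl i) \<in> Vec C" by (simp add: PF_def Vec_def rac_out)
    have "G1 (F1 (dl i)) = vmul C B (F1 (dl i)) ?G"
      using PF_vmul[OF finC modC finB modB H1 wP pfV] by simp
    then have "G1 (F1 (dl i)) k = (\<Sum>j\<in>C. ?F i j * ?G j k)"
      using k unfolding pf vmul_def by (auto intro!: sum.cong)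
    moreover have "G1 (F1 (dl i)) k = kap * (if k = i then 1 else 0)"
      using U_all[OF dV] by (simp add: dl_def)
    ultimately have "(\<Sum>j\<in>C. ?F i j * ?G j k) = kap * (if k = i then 1 else 0)" by simp
    then show ?thesis using kap_nz
      by (auto simp: sum_divide_distrib[symmetric] times_divide_eq_right)
  qed
  show ?thesis unfolding direct_summand_def
    by (intro exI[of _ ?F] exI[of _ "\<lambda>k i. ?G k i / kap"] conjI Fh G'h ballI id)
qed

end


abbreviation "Cm m \<equiv> {bs :: vb list. length bs = m}"

lemma finite_Cm: "finite (Cm m)"
proof -
  have "Cm m = {xs. set xs \<subseteq> (UNIV::vb set) \<and> length xs = m}" by auto
  then show ?thesis using finite_lists_length_eq[of "UNIV::vb set" m] by simp
qed

lemma tA_len: "tA h i j \<noteq> 0 \<Longrightarrow> length i = length j"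
  by (induction h i j rule: tA.induct) auto

lemma conj_mult: "qmul (qmul (qmul (qinv h) x) h) (qmul (qmul (qinv h) y) h) = qmul (qmul (qinv h) (qmul x y)) h"
proof -
  have "\<forall>h x y. qmul (qmul (qmul (qinv h) x) h) (qmul (qmul (qinv h) y) h) = qmul (qmul (qinv h) (qmul x y)) h"
    unfolding q8_all by simp
  then show ?thesis by blast
qed

lemma tA_grade: "tA h i j \<noteq> 0 \<Longrightarrow> tgr j = qmul (qmul (qinv h) (tgr i)) h"
proof (induction h i j rule: tA.induct)
  case (1 h)
  then show ?case by (simp add: grp_basic)
next
  case (2 h b bs c cs)
  then have "VA h b c \<noteq> 0" "tA h bs cs \<noteq> 0" by auto
  then show ?case using 2 VA_grade conj_mult by simp
qed auto

lemma tA_e: "length i = length k \<Longrightarrow> tA qe i k = (if i = k then 1 else 0)"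
proof (induction i arbitrary: k)
  case Nil then show ?case by simp
next
  case (Cons a i)
  then obtain b k' where "k = b # k'" by (cases k) auto
  then show ?case using Cons by (simp add: VA_e)
qed

lemma Cm_Suc: "Cm (Suc m) = (\<lambda>(b, bs). b # bs) ` (UNIV \<times> Cm m)"
proof
  show "Cm (Suc m) \<subseteq> (\<lambda>(b, bs). b # bs) ` (UNIV \<times> Cm m)"
  proof
    fix xs assume "xs \<in> Cm (Suc m)"
    then obtain b bs where "xs = b # bs" "length bs = m" by (cases xs) auto
    then show "xs \<in> (\<lambda>(b, bs). b # bs) ` (UNIV \<times> Cm m)" by force
  qed
qed auto

lemma sum_Cm_Suc: "(\<Sum>xs\<in>Cm (Suc m). f xs) = (\<Sum>b\<in>UNIV. \<Sum>bs\<in>Cm m. (f (b # bs) :: complex))"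
proof -
  have inj: "inj_on (\<lambda>(b, bs). b # bs) (UNIV \<times> Cm m)" by (auto simp: inj_on_def)
  have "(\<Sum>xs\<in>Cm (Suc m). f xs) = (\<Sum>p\<in>UNIV \<times> Cm m. f ((\<lambda>(b, bs). b # bs) p))"
    unfolding Cm_Suc by (simp add: sum.reindex[OF inj] comp_def)
  also have "\<dots> = (\<Sum>b\<in>UNIV. \<Sum>bs\<in>Cm m. f (b # bs))"
    by (simp add: sum.cartesian_product case_prod_beta)
  finally show ?thesis .
qed

lemma tA_mult: "length i = m \<Longrightarrow> length k = m \<Longrightarrow> (\<Sum>j\<in>Cm m. tA h i j * tA h' j k) = tA (qmul h h') i k"
proof (induction m arbitrary: i k)
  case 0 then show ?case by simp
next
  case (Suc m)
  obtain a i' where i: "i = a # i'" "length i' = m" using Suc.prems by (cases i) auto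
  obtain b k' where k: "k = b # k'" "length k' = m" using Suc.prems by (cases k) auto
  have "(\<Sum>j\<in>Cm (Suc m). tA h i j * tA h' j k)
      = (\<Sum>c\<in>UNIV. \<Sum>cs\<in>Cm m. (VA h a c * VA h' c b) * (tA h i' cs * tA h' cs k'))"
    unfolding sum_Cm_Suc i k by (simp add: ac_simps)
  also have "\<dots> = (\<Sum>c\<in>UNIV. VA h a c * VA h' c b) * (\<Sum>cs\<in>Cm m. tA h i' cs * tA h' cs k')"
    by (simp add: sum_product)
  also have "\<dots> = tA (qmul h h') i k"
    using Suc.IH[OF i(2) k(2)] by (simp add: i k VA_mult)
  finally show ?case .
qed

lemma W_module: "is_module (Cm m) (grmod tgr tA)"
  unfolding is_module_def
proof (intro conjI allI ballI)
  fix g h g' h' i k assume i: "i \<in> Cm m" and k: "k \<in> Cm m"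
  have "(\<Sum>j\<in>Cm m. grmod tgr tA g h i j * grmod tgr tA g' h' j k)
      = (\<Sum>j\<in>Cm m. if tgr i = g \<and> g' = qmul (qmul (qinv h) g) h then tA h i j * tA h' j k else 0)"
  proof (rule sum.cong[OF refl])
    fix j
    show "grmod tgr tA g h i j * grmod tgr tA g' h' j k
      = (if tgr i = g \<and> g' = qmul (qmul (qinv h) g) h then tA h i j * tA h' j k else 0)"
      using tA_grade[of h i j] by (auto simp: grmod_def)
  qed
  also have "\<dots> = (if tgr i = g \<and> g' = qmul (qmul (qinv h) g) h then tA (qmul h h') i k else 0)"
    by (cases "tgr i = g \<and> g' = qmul (qmul (qinv h) g) h") (use tA_mult[of i m k h h'] i k in auto)
  also have "\<dots> = (if g = qmul (qmul h g') (qinv h) then grmod tgr tA g (qmul h h') i k else 0)"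
    by (auto simp: grmod_def qconj_iff)
  finally show "(\<Sum>j\<in>Cm m. grmod tgr tA g h i j * grmod tgr tA g' h' j k) =
       (if g = qmul (qmul h g') (qinv h) then grmod tgr tA g (qmul h h') i k else 0)" .
next
  fix i k assume i: "i \<in> Cm m" and k: "k \<in> Cm m"
  have "(\<Sum>g\<in>UNIV. grmod tgr tA g qe i k) = tA qe i k"
    by (simp add: grmod_def)
  then show "(\<Sum>g\<in>UNIV. grmod tgr tA g qe i k) = (if i = k then 1 else 0)"
    using i k tA_e by simp
qed


definition mkf :: "complex list \<Rightarrow> q8 \<Rightarrow> complex" where
  "mkf vs x = (case Rep_q8 x of (a, b) \<Rightarrow> vs ! (a + 4 * b))"

lemma mkf_qmk[simp]: "mkf vs (qmk a b) = vs ! (a mod 4 + 4 * (b mod 2))"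
  by (simp add: mkf_def)

definition good :: "q8 \<Rightarrow> (q8 \<Rightarrow> complex) \<Rightarrow> (q8 \<Rightarrow> complex) \<Rightarrow> nat \<Rightarrow> vb list \<Rightarrow> bool" where
  "good g0 c \<tau> m t \<longleftrightarrow> (\<forall>z. c z \<noteq> 0 \<longrightarrow> qmul z g0 = qmul g0 z)
    \<and> (\<forall>k y. qmul k g0 = qmul g0 k \<longrightarrow> (\<Sum>z'\<in>UNIV. c z' * c (qmul (qinv (qmul z' k)) y)) = \<tau> k * c y)
    \<and> (\<forall>k. qmul k g0 \<noteq> qmul g0 k \<longrightarrow> \<tau> k = 0) \<and> \<tau> qe = 1
    \<and> (\<Sum>k\<in>UNIV. \<Sum>h\<in>UNIV. \<tau> (qinv h) * \<tau> (qmul h (qinv k)) * \<tau> k) \<noteq> 0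
    \<and> length t = m \<and> m \<in> {1..4} \<and> tgr t = g0 \<and> (\<Sum>z\<in>UNIV. c z * tA z t t) \<noteq> 0"

lemma Pv_dl_wit:
  assumes t: "length t = m" and tg: "tgr t = g0"
  shows "Pv (Cm m) (grmod tgr tA) g0 c (dl t) t = (\<Sum>z\<in>UNIV. c z * tA z t t)"
proof -
  have tC: "t \<in> Cm m" using t by simp
  have p: "prj (Cm m) (grmod tgr tA) g0 (dl t) = dl t"
  proof -
    have "prj (Cm m) (grmod tgr tA) g0 (dl t) = (\<lambda>k. if k \<in> Cm m then grmod tgr tA g0 qe t k else 0)"
      unfolding prj_def by (rule vmul_dl[OF finite_Cm tC])
    also have "\<dots> = dl t"
      using t tg by (intro ext) (auto simp: grmod_def tA_e dl_def)
    finally show ?thesis .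
  qed
  have r: "rac (Cm m) (grmod tgr tA) z (dl t) t = tA z t t" for z
    unfolding rac_def vmul_dl[OF finite_Cm tC] using tC by (simp add: Rm_def grmod_def)
  show ?thesis unfolding Pv_def p r ..
qed

lemma type_summand:
  assumes gd: "good g0 c \<tau> m t"
  and finB: "finite B" and modB: "is_module B act" and simB: "simple_module B act"
  and wP: "Pv B act g0 c w = w" and wnz: "w \<noteq> (\<lambda>_. 0)"
  shows "\<exists>m\<in>{1..4}. direct_summand B act (Cm m) (grmod tgr tA)"
proof -
  have H1: "\<forall>z. c z \<noteq> 0 \<longrightarrow> qmul z g0 = qmul g0 z"
   and NUM: "\<And>k y. qmul k g0 = qmul g0 k \<Longrightarrow> (\<Sum>z'\<in>UNIV. c z' * c (qmul (qinv (qmul z' k)) y)) = \<tau> k * c y"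
   and H0: "\<And>k. qmul k g0 \<noteq> qmul g0 k \<Longrightarrow> \<tau> k = 0" and te: "\<tau> qe = 1"
   and Knz: "(\<Sum>k\<in>UNIV. \<Sum>h\<in>UNIV. \<tau> (qinv h) * \<tau> (qmul h (qinv k)) * \<tau> k) \<noteq> 0"
   and t: "length t = m" and m: "m \<in> {1..4}" and tg: "tgr t = g0" and wit: "(\<Sum>z\<in>UNIV. c z * tA z t t) \<noteq> 0"
    using gd unfolding good_def by blast+
  have wV: "w \<in> Vec B" using wP Pv_Vec[of B act g0 c w] by simp
  obtain b0 where b0: "b0 \<in> B" "w b0 \<noteq> 0"
  proof -
    have "\<exists>b. w b \<noteq> 0" using wnz by auto
    then obtain b where "w b \<noteq> 0" by blast
    then show ?thesis using that wV unfolding Vec_def by blast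
  qed
  have NUMe: "\<And>y. (\<Sum>z'\<in>UNIV. c z' * c (qmul (qinv (qmul z' qe)) y)) = 1 * c y"
    using NUM[of qe] te by (simp add: grp_basic)
  let ?u = "Pv (Cm m) (grmod tgr tA) g0 c (dl t)"
  have uP: "Pv (Cm m) (grmod tgr tA) g0 c ?u = ?u"
    by (rule Pv_idem[OF finite_Cm W_module H1 NUMe])
  have ut: "?u t \<noteq> 0" using Pv_dl_wit[OF t tg] wit by simp
  have tC: "t \<in> Cm m" using t by simp
  have "direct_summand B act (Cm m) (grmod tgr tA)"
    by (rule core_summand[OF finB modB simB finite_Cm W_module H1 NUM H0 Knz wP b0 uP tC ut])
  then show ?thesis using m by blast
qed

lemma type_summand2:
  assumes gd: "good g0 c \<tau> m t"
  and finB: "finite B" and modB: "is_module B act" and simB: "simple_module B act"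
  and nz: "Pv B act g0 c v \<noteq> (\<lambda>_. 0)"
  shows "\<exists>m\<in>{1..4}. direct_summand B act (Cm m) (grmod tgr tA)"
proof -
  have H1: "\<forall>z. c z \<noteq> 0 \<longrightarrow> qmul z g0 = qmul g0 z"
   and NUM: "\<And>k y. qmul k g0 = qmul g0 k \<Longrightarrow> (\<Sum>z'\<in>UNIV. c z' * c (qmul (qinv (qmul z' k)) y)) = \<tau> k * c y"
   and te: "\<tau> qe = 1"
    using gd unfolding good_def by blast+
  have NUMe: "\<And>y. (\<Sum>z'\<in>UNIV. c z' * c (qmul (qinv (qmul z' qe)) y)) = 1 * c y"
    using NUM[of qe] te by (simp add: grp_basic)
  show ?thesis
    by (rule type_summand[OF gd finB modB simB Pv_idem[OF finB modB H1 NUMe] nz])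
qed

lemma Pv_plus: "Pv B act g0 (\<lambda>z. c1 z + c2 z) v = (\<lambda>j. Pv B act g0 c1 v j + Pv B act g0 c2 v j)"
  unfolding Pv_def by (simp add: sum.distrib algebra_simps)

lemma Pv_unit: "finite B \<Longrightarrow> is_module B act \<Longrightarrow> Pv B act g0 (\<lambda>z. if z = qe then 1 else 0) v = prj B act g0 v"
  unfolding Pv_def by (simp add: rac_unit)

lemma q8_ex: "(\<exists>x::q8. P x) \<longleftrightarrow> P (qmk 0 0) \<or> P (qmk 1 0) \<or> P (qmk 2 0) \<or> P (qmk 3 0) \<or> P (qmk 0 1) \<or> P (qmk 1 1) \<or> P (qmk 2 1) \<or> P (qmk 3 1)"
  using q8_all[of "\<lambda>x. \<not> P x"] by blast

lemma reps: "\<exists>h g0. g0 \<in> {qmk 0 0, qmk 2 0, qmk 1 0, qmk 0 1, qmk 3 1} \<and> qmul (qmul h g0) (qinv h) = g"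
proof -
  have "\<forall>g. \<exists>h g0. g0 \<in> {qmk 0 0, qmk 2 0, qmk 1 0, qmk 0 1, qmk 3 1} \<and> qmul (qmul h g0) (qinv h) = g"
    unfolding q8_all q8_ex by simp
  then show ?thesis by blast
qed


declare tgr.simps [simp] tA.simps [simp]

lemma good1: "good (qmk 1 0) (mkf [1/4, 1/4, 1/4, 1/4, 0, 0, 0, 0]) (mkf [1, 1, 1, 1, 0, 0, 0, 0]) 2 [U17, V21]"
  unfolding good_def q8_all sum_q8 q8_unit by (simp add: q8_unit)

lemma good2: "good (qmk 1 0) (mkf [1/4, -\<i>/4, -1/4, \<i>/4, 0, 0, 0, 0]) (mkf [1, \<i>, -1, -\<i>, 0, 0, 0, 0]) 2 [U17, V20]"
  unfolding good_def q8_all sum_q8 q8_unit by (simp add: q8_unit)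

lemma good3: "good (qmk 1 0) (mkf [1/4, -1/4, 1/4, -1/4, 0, 0, 0, 0]) (mkf [1, -1, 1, -1, 0, 0, 0, 0]) 2 [U17, V21]"
  unfolding good_def q8_all sum_q8 q8_unit by (simp add: q8_unit)

lemma good4: "good (qmk 1 0) (mkf [1/4, \<i>/4, -1/4, -\<i>/4, 0, 0, 0, 0]) (mkf [1, -\<i>, -1, \<i>, 0, 0, 0, 0]) 2 [U17, V20]"
  unfolding good_def q8_all sum_q8 q8_unit by (simp add: q8_unit)

lemma good5: "good (qmk 0 1) (mkf [1/4, 0, 1/4, 0, 1/4, 0, 1/4, 0]) (mkf [1, 0, 1, 0, 1, 0, 1, 0]) 3 [U17, U20, V21]"
  unfolding good_def q8_all sum_q8 q8_unit by (simp add: q8_unit)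

lemma good6: "good (qmk 0 1) (mkf [1/4, 0, -1/4, 0, -\<i>/4, 0, \<i>/4, 0]) (mkf [1, 0, -1, 0, \<i>, 0, -\<i>, 0]) 3 [U17, U20, V20]"
  unfolding good_def q8_all sum_q8 q8_unit by (simp add: q8_unit)

lemma good7: "good (qmk 0 1) (mkf [1/4, 0, 1/4, 0, -1/4, 0, -1/4, 0]) (mkf [1, 0, 1, 0, -1, 0, -1, 0]) 3 [U17, U20, V21]"
  unfolding good_def q8_all sum_q8 q8_unit by (simp add: q8_unit)

lemma good8: "good (qmk 0 1) (mkf [1/4, 0, -1/4, 0, \<i>/4, 0, -\<i>/4, 0]) (mkf [1, 0, -1, 0, -\<i>, 0, \<i>, 0]) 1 [U17]"
  unfolding good_def q8_all sum_q8 q8_unit by (simp add: q8_unit)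

lemma good9: "good (qmk 3 1) (mkf [1/4, 0, 1/4, 0, 0, 1/4, 0, 1/4]) (mkf [1, 0, 1, 0, 0, 1, 0, 1]) 3 [U17, U17, V20]"
  unfolding good_def q8_all sum_q8 q8_unit by (simp add: q8_unit)

lemma good10: "good (qmk 3 1) (mkf [1/4, 0, -1/4, 0, 0, \<i>/4, 0, -\<i>/4]) (mkf [1, 0, -1, 0, 0, -\<i>, 0, \<i>]) 3 [U17, U17, V21]"
  unfolding good_def q8_all sum_q8 q8_unit by (simp add: q8_unit)

lemma good11: "good (qmk 3 1) (mkf [1/4, 0, 1/4, 0, 0, -1/4, 0, -1/4]) (mkf [1, 0, 1, 0, 0, -1, 0, -1]) 1 [U20]"
  unfolding good_def q8_all sum_q8 q8_unit by (simp add: q8_unit)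

lemma good12: "good (qmk 3 1) (mkf [1/4, 0, -1/4, 0, 0, -\<i>/4, 0, \<i>/4]) (mkf [1, 0, -1, 0, 0, \<i>, 0, -\<i>]) 1 [U21]"
  unfolding good_def q8_all sum_q8 q8_unit by (simp add: q8_unit)

lemma good13: "good (qmk 0 0) (mkf [1/8, 1/8, 1/8, 1/8, 1/8, 1/8, 1/8, 1/8]) (mkf [1, 1, 1, 1, 1, 1, 1, 1]) 2 [U17, V17]"
  unfolding good_def q8_all sum_q8 q8_unit by (simp add: q8_unit)

lemma good14: "good (qmk 0 0) (mkf [1/8, 1/8, 1/8, 1/8, -1/8, -1/8, -1/8, -1/8]) (mkf [1, 1, 1, 1, -1, -1, -1, -1]) 4 [U17, U17, U20, U20]"
  unfolding good_def q8_all sum_q8 q8_unit by (simp add: q8_unit)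

lemma good15: "good (qmk 0 0) (mkf [1/8, -1/8, 1/8, -1/8, 1/8, -1/8, 1/8, -1/8]) (mkf [1, -1, 1, -1, 1, -1, 1, -1]) 2 [U17, V17]"
  unfolding good_def q8_all sum_q8 q8_unit by (simp add: q8_unit)

lemma good16: "good (qmk 0 0) (mkf [1/8, -1/8, 1/8, -1/8, -1/8, 1/8, -1/8, 1/8]) (mkf [1, -1, 1, -1, -1, 1, -1, 1]) 2 [U20, V20]"
  unfolding good_def q8_all sum_q8 q8_unit by (simp add: q8_unit)

lemma good17: "good (qmk 0 0) (mkf [1/4, -\<i>/4, -1/4, \<i>/4, 0, 0, 0, 0]) (mkf [1, \<i>, -1, -\<i>, 0, 0, 0, 0]) 2 [U20, V21]"
  unfolding good_def q8_all sum_q8 q8_unit by (simp add: q8_unit)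

lemma good18: "good (qmk 0 0) (mkf [1/4, \<i>/4, -1/4, -\<i>/4, 0, 0, 0, 0]) (mkf [1, -\<i>, -1, \<i>, 0, 0, 0, 0]) 2 [U20, V21]"
  unfolding good_def q8_all sum_q8 q8_unit by (simp add: q8_unit)

lemma good19: "good (qmk 2 0) (mkf [1/8, 1/8, 1/8, 1/8, 1/8, 1/8, 1/8, 1/8]) (mkf [1, 1, 1, 1, 1, 1, 1, 1]) 2 [U20, U20]"
  unfolding good_def q8_all sum_q8 q8_unit by (simp add: q8_unit)

lemma good20: "good (qmk 2 0) (mkf [1/8, 1/8, 1/8, 1/8, -1/8, -1/8, -1/8, -1/8]) (mkf [1, 1, 1, 1, -1, -1, -1, -1]) 2 [U17, U17]"
  unfolding good_def q8_all sum_q8 q8_unit by (simp add: q8_unit)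

lemma good21: "good (qmk 2 0) (mkf [1/8, -1/8, 1/8, -1/8, 1/8, -1/8, 1/8, -1/8]) (mkf [1, -1, 1, -1, 1, -1, 1, -1]) 2 [U21, U21]"
  unfolding good_def q8_all sum_q8 q8_unit by (simp add: q8_unit)

lemma good22: "good (qmk 2 0) (mkf [1/8, -1/8, 1/8, -1/8, -1/8, 1/8, -1/8, 1/8]) (mkf [1, -1, 1, -1, -1, 1, -1, 1]) 2 [U17, U17]"
  unfolding good_def q8_all sum_q8 q8_unit by (simp add: q8_unit)

lemma good23: "good (qmk 2 0) (mkf [1/4, -\<i>/4, -1/4, \<i>/4, 0, 0, 0, 0]) (mkf [1, \<i>, -1, -\<i>, 0, 0, 0, 0]) 2 [U20, U21]"
  unfolding good_def q8_all sum_q8 q8_unit by (simp add: q8_unit)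

lemma good24: "good (qmk 2 0) (mkf [1/4, \<i>/4, -1/4, -\<i>/4, 0, 0, 0, 0]) (mkf [1, -\<i>, -1, \<i>, 0, 0, 0, 0]) 2 [U20, U21]"
  unfolding good_def q8_all sum_q8 q8_unit by (simp add: q8_unit)

lemma case_r:
  assumes finB: "finite B" and modB: "is_module B act" and simB: "simple_module B act"
  and nz: "prj B act (qmk 1 0) v \<noteq> (\<lambda>_. 0)"
  shows "\<exists>m\<in>{1..4}. direct_summand B act (Cm m) (grmod tgr tA)"
proof (rule ccontr)
  assume nex: "\<not> (\<exists>m\<in>{1..4}. direct_summand B act (Cm m) (grmod tgr tA))"
  have z0: "Pv B act (qmk 1 0) (mkf [1/4, 1/4, 1/4, 1/4, 0, 0, 0, 0]) v = (\<lambda>_. 0)" using type_summand2[OF good1 finB modB simB] nex by blast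
  have z1: "Pv B act (qmk 1 0) (mkf [1/4, -\<i>/4, -1/4, \<i>/4, 0, 0, 0, 0]) v = (\<lambda>_. 0)" using type_summand2[OF good2 finB modB simB] nex by blast
  have z2: "Pv B act (qmk 1 0) (mkf [1/4, -1/4, 1/4, -1/4, 0, 0, 0, 0]) v = (\<lambda>_. 0)" using type_summand2[OF good3 finB modB simB] nex by blast
  have z3: "Pv B act (qmk 1 0) (mkf [1/4, \<i>/4, -1/4, -\<i>/4, 0, 0, 0, 0]) v = (\<lambda>_. 0)" using type_summand2[OF good4 finB modB simB] nex by blast
  have cs: "(\<lambda>z. (mkf [1/4, 1/4, 1/4, 1/4, 0, 0, 0, 0]) z + ((mkf [1/4, -\<i>/4, -1/4, \<i>/4, 0, 0, 0, 0]) z + ((mkf [1/4, -1/4, 1/4, -1/4, 0, 0, 0, 0]) z + ((mkf [1/4, \<i>/4, -1/4, -\<i>/4, 0, 0, 0, 0]) z)))) = (\<lambda>z. if z = qe then 1 else 0)"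
  proof -
    have "\<forall>z. (mkf [1/4, 1/4, 1/4, 1/4, 0, 0, 0, 0]) z + ((mkf [1/4, -\<i>/4, -1/4, \<i>/4, 0, 0, 0, 0]) z + ((mkf [1/4, -1/4, 1/4, -1/4, 0, 0, 0, 0]) z + ((mkf [1/4, \<i>/4, -1/4, -\<i>/4, 0, 0, 0, 0]) z))) = (if z = qe then 1 else 0)"
      unfolding q8_all q8_unit by simp
    then show ?thesis by auto
  qed
  have "prj B act (qmk 1 0) v = Pv B act (qmk 1 0) (\<lambda>z. (mkf [1/4, 1/4, 1/4, 1/4, 0, 0, 0, 0]) z + ((mkf [1/4, -\<i>/4, -1/4, \<i>/4, 0, 0, 0, 0]) z + ((mkf [1/4, -1/4, 1/4, -1/4, 0, 0, 0, 0]) z + ((mkf [1/4, \<i>/4, -1/4, -\<i>/4, 0, 0, 0, 0]) z)))) v"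
    unfolding cs Pv_unit[OF finB modB] ..
  also have "\<dots> = (\<lambda>j. Pv B act (qmk 1 0) (mkf [1/4, 1/4, 1/4, 1/4, 0, 0, 0, 0]) v j + (Pv B act (qmk 1 0) (mkf [1/4, -\<i>/4, -1/4, \<i>/4, 0, 0, 0, 0]) v j + (Pv B act (qmk 1 0) (mkf [1/4, -1/4, 1/4, -1/4, 0, 0, 0, 0]) v j + (Pv B act (qmk 1 0) (mkf [1/4, \<i>/4, -1/4, -\<i>/4, 0, 0, 0, 0]) v j))))"
    by (simp only: Pv_plus)
  also have "\<dots> = (\<lambda>_. 0)" by (simp only: z0 z1 z2 z3) simp
  finally show False using nz by simp
qed

lemma case_s:
  assumes finB: "finite B" and modB: "is_module B act" and simB: "simple_module B act"
  and nz: "prj B act (qmk 0 1) v \<noteq> (\<lambda>_. 0)"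
  shows "\<exists>m\<in>{1..4}. direct_summand B act (Cm m) (grmod tgr tA)"
proof (rule ccontr)
  assume nex: "\<not> (\<exists>m\<in>{1..4}. direct_summand B act (Cm m) (grmod tgr tA))"
  have z0: "Pv B act (qmk 0 1) (mkf [1/4, 0, 1/4, 0, 1/4, 0, 1/4, 0]) v = (\<lambda>_. 0)" using type_summand2[OF good5 finB modB simB] nex by blast
  have z1: "Pv B act (qmk 0 1) (mkf [1/4, 0, -1/4, 0, -\<i>/4, 0, \<i>/4, 0]) v = (\<lambda>_. 0)" using type_summand2[OF good6 finB modB simB] nex by blast
  have z2: "Pv B act (qmk 0 1) (mkf [1/4, 0, 1/4, 0, -1/4, 0, -1/4, 0]) v = (\<lambda>_. 0)" using type_summand2[OF good7 finB modB simB] nex by blast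
  have z3: "Pv B act (qmk 0 1) (mkf [1/4, 0, -1/4, 0, \<i>/4, 0, -\<i>/4, 0]) v = (\<lambda>_. 0)" using type_summand2[OF good8 finB modB simB] nex by blast
  have cs: "(\<lambda>z. (mkf [1/4, 0, 1/4, 0, 1/4, 0, 1/4, 0]) z + ((mkf [1/4, 0, -1/4, 0, -\<i>/4, 0, \<i>/4, 0]) z + ((mkf [1/4, 0, 1/4, 0, -1/4, 0, -1/4, 0]) z + ((mkf [1/4, 0, -1/4, 0, \<i>/4, 0, -\<i>/4, 0]) z)))) = (\<lambda>z. if z = qe then 1 else 0)"
  proof -
    have "\<forall>z. (mkf [1/4, 0, 1/4, 0, 1/4, 0, 1/4, 0]) z + ((mkf [1/4, 0, -1/4, 0, -\<i>/4, 0, \<i>/4, 0]) z + ((mkf [1/4, 0, 1/4, 0, -1/4, 0, -1/4, 0]) z + ((mkf [1/4, 0, -1/4, 0, \<i>/4, 0, -\<i>/4, 0]) z))) = (if z = qe then 1 else 0)"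
      unfolding q8_all q8_unit by simp
    then show ?thesis by auto
  qed
  have "prj B act (qmk 0 1) v = Pv B act (qmk 0 1) (\<lambda>z. (mkf [1/4, 0, 1/4, 0, 1/4, 0, 1/4, 0]) z + ((mkf [1/4, 0, -1/4, 0, -\<i>/4, 0, \<i>/4, 0]) z + ((mkf [1/4, 0, 1/4, 0, -1/4, 0, -1/4, 0]) z + ((mkf [1/4, 0, -1/4, 0, \<i>/4, 0, -\<i>/4, 0]) z)))) v"
    unfolding cs Pv_unit[OF finB modB] ..
  also have "\<dots> = (\<lambda>j. Pv B act (qmk 0 1) (mkf [1/4, 0, 1/4, 0, 1/4, 0, 1/4, 0]) v j + (Pv B act (qmk 0 1) (mkf [1/4, 0, -1/4, 0, -\<i>/4, 0, \<i>/4, 0]) v j + (Pv B act (qmk 0 1) (mkf [1/4, 0, 1/4, 0, -1/4, 0, -1/4, 0]) v j + (Pv B act (qmk 0 1) (mkf [1/4, 0, -1/4, 0, \<i>/4, 0, -\<i>/4, 0]) v j))))"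
    by (simp only: Pv_plus)
  also have "\<dots> = (\<lambda>_. 0)" by (simp only: z0 z1 z2 z3) simp
  finally show False using nz by simp
qed

lemma case_sr:
  assumes finB: "finite B" and modB: "is_module B act" and simB: "simple_module B act"
  and nz: "prj B act (qmk 3 1) v \<noteq> (\<lambda>_. 0)"
  shows "\<exists>m\<in>{1..4}. direct_summand B act (Cm m) (grmod tgr tA)"
proof (rule ccontr)
  assume nex: "\<not> (\<exists>m\<in>{1..4}. direct_summand B act (Cm m) (grmod tgr tA))"
  have z0: "Pv B act (qmk 3 1) (mkf [1/4, 0, 1/4, 0, 0, 1/4, 0, 1/4]) v = (\<lambda>_. 0)" using type_summand2[OF good9 finB modB simB] nex by blast
  have z1: "Pv B act (qmk 3 1) (mkf [1/4, 0, -1/4, 0, 0, \<i>/4, 0, -\<i>/4]) v = (\<lambda>_. 0)" using type_summand2[OF good10 finB modB simB] nex by blast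
  have z2: "Pv B act (qmk 3 1) (mkf [1/4, 0, 1/4, 0, 0, -1/4, 0, -1/4]) v = (\<lambda>_. 0)" using type_summand2[OF good11 finB modB simB] nex by blast
  have z3: "Pv B act (qmk 3 1) (mkf [1/4, 0, -1/4, 0, 0, -\<i>/4, 0, \<i>/4]) v = (\<lambda>_. 0)" using type_summand2[OF good12 finB modB simB] nex by blast
  have cs: "(\<lambda>z. (mkf [1/4, 0, 1/4, 0, 0, 1/4, 0, 1/4]) z + ((mkf [1/4, 0, -1/4, 0, 0, \<i>/4, 0, -\<i>/4]) z + ((mkf [1/4, 0, 1/4, 0, 0, -1/4, 0, -1/4]) z + ((mkf [1/4, 0, -1/4, 0, 0, -\<i>/4, 0, \<i>/4]) z)))) = (\<lambda>z. if z = qe then 1 else 0)"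
  proof -
    have "\<forall>z. (mkf [1/4, 0, 1/4, 0, 0, 1/4, 0, 1/4]) z + ((mkf [1/4, 0, -1/4, 0, 0, \<i>/4, 0, -\<i>/4]) z + ((mkf [1/4, 0, 1/4, 0, 0, -1/4, 0, -1/4]) z + ((mkf [1/4, 0, -1/4, 0, 0, -\<i>/4, 0, \<i>/4]) z))) = (if z = qe then 1 else 0)"
      unfolding q8_all q8_unit by simp
    then show ?thesis by auto
  qed
  have "prj B act (qmk 3 1) v = Pv B act (qmk 3 1) (\<lambda>z. (mkf [1/4, 0, 1/4, 0, 0, 1/4, 0, 1/4]) z + ((mkf [1/4, 0, -1/4, 0, 0, \<i>/4, 0, -\<i>/4]) z + ((mkf [1/4, 0, 1/4, 0, 0, -1/4, 0, -1/4]) z + ((mkf [1/4, 0, -1/4, 0, 0, -\<i>/4, 0, \<i>/4]) z)))) v"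
    unfolding cs Pv_unit[OF finB modB] ..
  also have "\<dots> = (\<lambda>j. Pv B act (qmk 3 1) (mkf [1/4, 0, 1/4, 0, 0, 1/4, 0, 1/4]) v j + (Pv B act (qmk 3 1) (mkf [1/4, 0, -1/4, 0, 0, \<i>/4, 0, -\<i>/4]) v j + (Pv B act (qmk 3 1) (mkf [1/4, 0, 1/4, 0, 0, -1/4, 0, -1/4]) v j + (Pv B act (qmk 3 1) (mkf [1/4, 0, -1/4, 0, 0, -\<i>/4, 0, \<i>/4]) v j))))"
    by (simp only: Pv_plus)
  also have "\<dots> = (\<lambda>_. 0)" by (simp only: z0 z1 z2 z3) simp
  finally show False using nz by simp
qed

lemma case_e:
  assumes finB: "finite B" and modB: "is_module B act" and simB: "simple_module B act"
  and nz: "prj B act (qmk 0 0) v \<noteq> (\<lambda>_. 0)"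
  shows "\<exists>m\<in>{1..4}. direct_summand B act (Cm m) (grmod tgr tA)"
proof (rule ccontr)
  assume nex: "\<not> (\<exists>m\<in>{1..4}. direct_summand B act (Cm m) (grmod tgr tA))"
  have z0: "Pv B act (qmk 0 0) (mkf [1/8, 1/8, 1/8, 1/8, 1/8, 1/8, 1/8, 1/8]) v = (\<lambda>_. 0)" using type_summand2[OF good13 finB modB simB] nex by blast
  have z1: "Pv B act (qmk 0 0) (mkf [1/8, 1/8, 1/8, 1/8, -1/8, -1/8, -1/8, -1/8]) v = (\<lambda>_. 0)" using type_summand2[OF good14 finB modB simB] nex by blast
  have z2: "Pv B act (qmk 0 0) (mkf [1/8, -1/8, 1/8, -1/8, 1/8, -1/8, 1/8, -1/8]) v = (\<lambda>_. 0)" using type_summand2[OF good15 finB modB simB] nex by blast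
  have z3: "Pv B act (qmk 0 0) (mkf [1/8, -1/8, 1/8, -1/8, -1/8, 1/8, -1/8, 1/8]) v = (\<lambda>_. 0)" using type_summand2[OF good16 finB modB simB] nex by blast
  have z4: "Pv B act (qmk 0 0) (mkf [1/4, -\<i>/4, -1/4, \<i>/4, 0, 0, 0, 0]) v = (\<lambda>_. 0)" using type_summand2[OF good17 finB modB simB] nex by blast
  have z5: "Pv B act (qmk 0 0) (mkf [1/4, \<i>/4, -1/4, -\<i>/4, 0, 0, 0, 0]) v = (\<lambda>_. 0)" using type_summand2[OF good18 finB modB simB] nex by blast
  have cs: "(\<lambda>z. (mkf [1/8, 1/8, 1/8, 1/8, 1/8, 1/8, 1/8, 1/8]) z + ((mkf [1/8, 1/8, 1/8, 1/8, -1/8, -1/8, -1/8, -1/8]) z + ((mkf [1/8, -1/8, 1/8, -1/8, 1/8, -1/8, 1/8, -1/8]) z + ((mkf [1/8, -1/8, 1/8, -1/8, -1/8, 1/8, -1/8, 1/8]) z + ((mkf [1/4, -\<i>/4, -1/4, \<i>/4, 0, 0, 0, 0]) z + ((mkf [1/4, \<i>/4, -1/4, -\<i>/4, 0, 0, 0, 0]) z)))))) = (\<lambda>z. if z = qe then 1 else 0)"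
  proof -
    have "\<forall>z. (mkf [1/8, 1/8, 1/8, 1/8, 1/8, 1/8, 1/8, 1/8]) z + ((mkf [1/8, 1/8, 1/8, 1/8, -1/8, -1/8, -1/8, -1/8]) z + ((mkf [1/8, -1/8, 1/8, -1/8, 1/8, -1/8, 1/8, -1/8]) z + ((mkf [1/8, -1/8, 1/8, -1/8, -1/8, 1/8, -1/8, 1/8]) z + ((mkf [1/4, -\<i>/4, -1/4, \<i>/4, 0, 0, 0, 0]) z + ((mkf [1/4, \<i>/4, -1/4, -\<i>/4, 0, 0, 0, 0]) z))))) = (if z = qe then 1 else 0)"
      unfolding q8_all q8_unit by simp
    then show ?thesis by auto
  qed
  have "prj B act (qmk 0 0) v = Pv B act (qmk 0 0) (\<lambda>z. (mkf [1/8, 1/8, 1/8, 1/8, 1/8, 1/8, 1/8, 1/8]) z + ((mkf [1/8, 1/8, 1/8, 1/8, -1/8, -1/8, -1/8, -1/8]) z + ((mkf [1/8, -1/8, 1/8, -1/8, 1/8, -1/8, 1/8, -1/8]) z + ((mkf [1/8, -1/8, 1/8, -1/8, -1/8, 1/8, -1/8, 1/8]) z + ((mkf [1/4, -\<i>/4, -1/4, \<i>/4, 0, 0, 0, 0]) z + ((mkf [1/4, \<i>/4, -1/4, -\<i>/4, 0, 0, 0, 0]) z)))))) v"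
    unfolding cs Pv_unit[OF finB modB] ..
  also have "\<dots> = (\<lambda>j. Pv B act (qmk 0 0) (mkf [1/8, 1/8, 1/8, 1/8, 1/8, 1/8, 1/8, 1/8]) v j + (Pv B act (qmk 0 0) (mkf [1/8, 1/8, 1/8, 1/8, -1/8, -1/8, -1/8, -1/8]) v j + (Pv B act (qmk 0 0) (mkf [1/8, -1/8, 1/8, -1/8, 1/8, -1/8, 1/8, -1/8]) v j + (Pv B act (qmk 0 0) (mkf [1/8, -1/8, 1/8, -1/8, -1/8, 1/8, -1/8, 1/8]) v j + (Pv B act (qmk 0 0) (mkf [1/4, -\<i>/4, -1/4, \<i>/4, 0, 0, 0, 0]) v j + (Pv B act (qmk 0 0) (mkf [1/4, \<i>/4, -1/4, -\<i>/4, 0, 0, 0, 0]) v j))))))"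
    by (simp only: Pv_plus)
  also have "\<dots> = (\<lambda>_. 0)" by (simp only: z0 z1 z2 z3 z4 z5) simp
  finally show False using nz by simp
qed

lemma case_r2:
  assumes finB: "finite B" and modB: "is_module B act" and simB: "simple_module B act"
  and nz: "prj B act (qmk 2 0) v \<noteq> (\<lambda>_. 0)"
  shows "\<exists>m\<in>{1..4}. direct_summand B act (Cm m) (grmod tgr tA)"
proof (rule ccontr)
  assume nex: "\<not> (\<exists>m\<in>{1..4}. direct_summand B act (Cm m) (grmod tgr tA))"
  have z0: "Pv B act (qmk 2 0) (mkf [1/8, 1/8, 1/8, 1/8, 1/8, 1/8, 1/8, 1/8]) v = (\<lambda>_. 0)" using type_summand2[OF good19 finB modB simB] nex by blast
  have z1: "Pv B act (qmk 2 0) (mkf [1/8, 1/8, 1/8, 1/8, -1/8, -1/8, -1/8, -1/8]) v = (\<lambda>_. 0)" using type_summand2[OF good20 finB modB simB] nex by blast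
  have z2: "Pv B act (qmk 2 0) (mkf [1/8, -1/8, 1/8, -1/8, 1/8, -1/8, 1/8, -1/8]) v = (\<lambda>_. 0)" using type_summand2[OF good21 finB modB simB] nex by blast
  have z3: "Pv B act (qmk 2 0) (mkf [1/8, -1/8, 1/8, -1/8, -1/8, 1/8, -1/8, 1/8]) v = (\<lambda>_. 0)" using type_summand2[OF good22 finB modB simB] nex by blast
  have z4: "Pv B act (qmk 2 0) (mkf [1/4, -\<i>/4, -1/4, \<i>/4, 0, 0, 0, 0]) v = (\<lambda>_. 0)" using type_summand2[OF good23 finB modB simB] nex by blast
  have z5: "Pv B act (qmk 2 0) (mkf [1/4, \<i>/4, -1/4, -\<i>/4, 0, 0, 0, 0]) v = (\<lambda>_. 0)" using type_summand2[OF good24 finB modB simB] nex by blast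
  have cs: "(\<lambda>z. (mkf [1/8, 1/8, 1/8, 1/8, 1/8, 1/8, 1/8, 1/8]) z + ((mkf [1/8, 1/8, 1/8, 1/8, -1/8, -1/8, -1/8, -1/8]) z + ((mkf [1/8, -1/8, 1/8, -1/8, 1/8, -1/8, 1/8, -1/8]) z + ((mkf [1/8, -1/8, 1/8, -1/8, -1/8, 1/8, -1/8, 1/8]) z + ((mkf [1/4, -\<i>/4, -1/4, \<i>/4, 0, 0, 0, 0]) z + ((mkf [1/4, \<i>/4, -1/4, -\<i>/4, 0, 0, 0, 0]) z)))))) = (\<lambda>z. if z = qe then 1 else 0)"
  proof -
    have "\<forall>z. (mkf [1/8, 1/8, 1/8, 1/8, 1/8, 1/8, 1/8, 1/8]) z + ((mkf [1/8, 1/8, 1/8, 1/8, -1/8, -1/8, -1/8, -1/8]) z + ((mkf [1/8, -1/8, 1/8, -1/8, 1/8, -1/8, 1/8, -1/8]) z + ((mkf [1/8, -1/8, 1/8, -1/8, -1/8, 1/8, -1/8, 1/8]) z + ((mkf [1/4, -\<i>/4, -1/4, \<i>/4, 0, 0, 0, 0]) z + ((mkf [1/4, \<i>/4, -1/4, -\<i>/4, 0, 0, 0, 0]) z))))) = (if z = qe then 1 else 0)"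
      unfolding q8_all q8_unit by simp
    then show ?thesis by auto
  qed
  have "prj B act (qmk 2 0) v = Pv B act (qmk 2 0) (\<lambda>z. (mkf [1/8, 1/8, 1/8, 1/8, 1/8, 1/8, 1/8, 1/8]) z + ((mkf [1/8, 1/8, 1/8, 1/8, -1/8, -1/8, -1/8, -1/8]) z + ((mkf [1/8, -1/8, 1/8, -1/8, 1/8, -1/8, 1/8, -1/8]) z + ((mkf [1/8, -1/8, 1/8, -1/8, -1/8, 1/8, -1/8, 1/8]) z + ((mkf [1/4, -\<i>/4, -1/4, \<i>/4, 0, 0, 0, 0]) z + ((mkf [1/4, \<i>/4, -1/4, -\<i>/4, 0, 0, 0, 0]) z)))))) v"
    unfolding cs Pv_unit[OF finB modB] ..
  also have "\<dots> = (\<lambda>j. Pv B act (qmk 2 0) (mkf [1/8, 1/8, 1/8, 1/8, 1/8, 1/8, 1/8, 1/8]) v j + (Pv B act (qmk 2 0) (mkf [1/8, 1/8, 1/8, 1/8, -1/8, -1/8, -1/8, -1/8]) v j + (Pv B act (qmk 2 0) (mkf [1/8, -1/8, 1/8, -1/8, 1/8, -1/8, 1/8, -1/8]) v j + (Pv B act (qmk 2 0) (mkf [1/8, -1/8, 1/8, -1/8, -1/8, 1/8, -1/8, 1/8]) v j + (Pv B act (qmk 2 0) (mkf [1/4, -\<i>/4, -1/4, \<i>/4, 0, 0, 0, 0]) v j + (Pv B act (qmk 2 0) (mkf [1/4, \<i>/4, -1/4, -\<i>/4, 0, 0, 0, 0]) v j))))))"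
    by (simp only: Pv_plus)
  also have "\<dots> = (\<lambda>_. 0)" by (simp only: z0 z1 z2 z3 z4 z5) simp
  finally show False using nz by simp
qed

lemma partB:
  assumes finB: "finite B" and modB: "is_module B act" and simB: "simple_module B act"
  shows "\<exists>m\<in>{1..4}. direct_summand B act (Cm m) (grmod tgr tA)"
proof -
  obtain b where b: "b \<in> B" using simB unfolding simple_module_def by blast
  have vV: "dl b \<in> Vec B" using b by (simp add: Vec_def dl_def)
  have "\<exists>g. prj B act g (dl b) \<noteq> (\<lambda>_. 0)"
  proof (rule ccontr)
    assume "\<not> (\<exists>g. prj B act g (dl b) \<noteq> (\<lambda>_. 0))"
    then have "\<And>g. prj B act g (dl b) = (\<lambda>_. 0)" by blast
    then have "(\<lambda>j. \<Sum>g\<in>UNIV. prj B act g (dl b) j) = (\<lambda>_. 0)" by simp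
    then have "dl b = (\<lambda>_. 0)" using prj_sum[OF finB modB vV] by simp
    then show False by (metis dl_def zero_neq_one)
  qed
  then obtain g where g: "prj B act g (dl b) \<noteq> (\<lambda>_. 0)" by blast
  obtain h g0 where g0: "g0 \<in> {qmk 0 0, qmk 2 0, qmk 1 0, qmk 0 1, qmk 3 1}" and hg: "qmul (qmul h g0) (qinv h) = g"
    using reps by blast
  have nz: "prj B act g0 (rac B act h (dl b)) \<noteq> (\<lambda>_. 0)"
  proof
    assume "prj B act g0 (rac B act h (dl b)) = (\<lambda>_. 0)"
    then have "rac B act h (prj B act g (dl b)) = (\<lambda>_. 0)"
      unfolding prj_rac[OF finB modB] hg .
    then have "rac B act (qinv h) (rac B act h (prj B act g (dl b))) = (\<lambda>_. 0)" by simp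
    then have "prj B act g (dl b) = (\<lambda>_. 0)" using rac_inv[OF finB modB prj_Vec] by simp
    then show False using g by simp
  qed
  have "g0 = qmk 0 0 \<or> g0 = qmk 2 0 \<or> g0 = qmk 1 0 \<or> g0 = qmk 0 1 \<or> g0 = qmk 3 1" using g0 by blast
  then show ?thesis
  proof (elim disjE)
    assume "g0 = qmk 0 0" then show ?thesis using nz by (intro case_e[OF finB modB simB]) simp
  next
    assume "g0 = qmk 2 0" then show ?thesis using nz by (intro case_r2[OF finB modB simB]) simp
  next
    assume "g0 = qmk 1 0" then show ?thesis using nz by (intro case_r[OF finB modB simB]) simp
  next
    assume "g0 = qmk 0 1" then show ?thesis using nz by (intro case_s[OF finB modB simB]) simp
  next
    assume "g0 = qmk 3 1" then show ?thesis using nz by (intro case_sr[OF finB modB simB]) simp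
  qed
qed


definition pair :: "(q8 \<times> q8 \<Rightarrow> complex) \<Rightarrow> dd \<Rightarrow> complex" where
  "pair f x = (\<Sum>p\<in>UNIV. f p * x p)"

definition conv :: "(q8 \<times> q8 \<Rightarrow> complex) \<Rightarrow> (q8 \<times> q8 \<Rightarrow> complex) \<Rightarrow> q8 \<times> q8 \<Rightarrow> complex" where
  "conv f1 f2 = (\<lambda>(g, h). \<Sum>x1\<in>UNIV. \<Sum>x2\<in>UNIV. if qmul x1 x2 = g then f1 (x1, h) * f2 (x2, h) else 0)"

definition gs :: "q8 \<Rightarrow> (q8 \<Rightarrow> complex) \<Rightarrow> q8 \<times> q8 \<Rightarrow> complex" where
  "gs g a = (\<lambda>(x, h). if x = g then a h else 0)"

definition ann :: "dd set \<Rightarrow> (q8 \<times> q8 \<Rightarrow> complex) \<Rightarrow> bool" where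
  "ann I f \<longleftrightarrow> (\<forall>x\<in>I. pair f x = 0)"

lemma sum_pair: "(\<Sum>p\<in>(UNIV :: (q8 \<times> q8) set). F p) = (\<Sum>a\<in>UNIV. \<Sum>b\<in>UNIV. (F (a, b) :: complex))"
  by (rule sym) (simp add: sum.cartesian_product)

lemma sum_pair2: "(\<Sum>p\<in>(UNIV :: ((q8 \<times> q8) \<times> (q8 \<times> q8)) set). F p) = (\<Sum>a\<in>UNIV. \<Sum>b\<in>UNIV. (F (a, b) :: complex))"
  by (rule sym) (simp add: sum.cartesian_product)

lemma if_mult_0[simp]: "(if P then A else 0) * (X::complex) = (if P then A * X else 0)" by simp

lemma sum_if_const: "(\<Sum>x\<in>A. if P then f x else 0) = (if P then (\<Sum>x\<in>A. f x) else (0::complex))"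
  by (cases P) simp_all

lemma conv_gs: "conv (gs g1 a) (gs g2 b) = gs (qmul g1 g2) (\<lambda>h. a h * b h)"
proof (rule ext, clarify)
  fix g h
  have e: "\<And>x1 x2. (if qmul x1 x2 = g then gs g1 a (x1, h) * gs g2 b (x2, h) else 0)
     = (if x1 = g1 then (if x2 = g2 then (if qmul g1 g2 = g then a h * b h else 0) else 0) else 0)"
    by (auto simp: gs_def)
  have "(\<Sum>x1\<in>UNIV. \<Sum>x2\<in>UNIV. if qmul x1 x2 = g then gs g1 a (x1, h) * gs g2 b (x2, h) else 0)
     = (if qmul g1 g2 = g then a h * b h else 0)" unfolding e by (simp add: sum_if_const)
  moreover have "conv (gs g1 a) (gs g2 b) (g, h) = (\<Sum>x1\<in>UNIV. \<Sum>x2\<in>UNIV. if qmul x1 x2 = g then gs g1 a (x1, h) * gs g2 b (x2, h) else 0)"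
    by (simp add: conv_def)
  moreover have "gs (qmul g1 g2) (\<lambda>h. a h * b h) (g, h) = (if qmul g1 g2 = g then a h * b h else 0)"
    by (auto simp: gs_def)
  ultimately show "conv (gs g1 a) (gs g2 b) (g, h) = gs (qmul g1 g2) (\<lambda>h. a h * b h) (g, h)"
    by simp
qed

lemma bil_span:
  assumes "y \<in> cspan S" and "\<And>s. s \<in> S \<Longrightarrow> (\<Sum>p\<in>UNIV. s p * W p) = 0"
  shows "(\<Sum>p\<in>UNIV. y p * W p) = (0::complex)"
  using assms
proof (induction rule: cspan.induct)
  case zero then show ?case by simp
next
  case (add x y c)
  have "(\<Sum>p\<in>UNIV. (c * x p + y p) * W p) = c * (\<Sum>p\<in>UNIV. x p * W p) + (\<Sum>p\<in>UNIV. y p * W p)"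
    by (simp add: sum.distrib sum_distrib_left algebra_simps)
  then show ?case using add by simp
qed

lemma pair_conv: "pair (conv f1 f2) x = (\<Sum>p\<in>UNIV. dcomul x p * (f1 (fst p) * f2 (snd p)))"
proof -
  have L: "pair (conv f1 f2) x = (\<Sum>h\<in>UNIV. \<Sum>x1\<in>UNIV. \<Sum>x2\<in>UNIV. f1 (x1, h) * f2 (x2, h) * x (qmul x1 x2, h))"
  proof -
    have "pair (conv f1 f2) x = (\<Sum>g\<in>UNIV. \<Sum>h\<in>UNIV. \<Sum>x1\<in>UNIV. \<Sum>x2\<in>UNIV. if qmul x1 x2 = g then f1 (x1, h) * f2 (x2, h) * x (g, h) else 0)"
      unfolding pair_def sum_pair conv_def by (simp add: sum_distrib_right)
    also have "\<dots> = (\<Sum>h\<in>UNIV. \<Sum>g\<in>UNIV. \<Sum>x1\<in>UNIV. \<Sum>x2\<in>UNIV. if qmul x1 x2 = g then f1 (x1, h) * f2 (x2, h) * x (g, h) else 0)"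
      by (rule sum.swap)
    also have "\<dots> = (\<Sum>h\<in>UNIV. \<Sum>x1\<in>UNIV. \<Sum>x2\<in>UNIV. \<Sum>g\<in>UNIV. if qmul x1 x2 = g then f1 (x1, h) * f2 (x2, h) * x (g, h) else 0)"
    proof (rule sum.cong[OF refl])
      fix h
      have "(\<Sum>g\<in>UNIV. \<Sum>x1\<in>UNIV. \<Sum>x2\<in>UNIV. if qmul x1 x2 = g then f1 (x1, h) * f2 (x2, h) * x (g, h) else 0)
          = (\<Sum>x1\<in>UNIV. \<Sum>g\<in>UNIV. \<Sum>x2\<in>UNIV. if qmul x1 x2 = g then f1 (x1, h) * f2 (x2, h) * x (g, h) else 0)"
        by (rule sum.swap)
      also have "\<dots> = (\<Sum>x1\<in>UNIV. \<Sum>x2\<in>UNIV. \<Sum>g\<in>UNIV. if qmul x1 x2 = g then f1 (x1, h) * f2 (x2, h) * x (g, h) else 0)"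
        by (rule sum.cong[OF refl], rule sum.swap)
      finally show "(\<Sum>g\<in>UNIV. \<Sum>x1\<in>UNIV. \<Sum>x2\<in>UNIV. if qmul x1 x2 = g then f1 (x1, h) * f2 (x2, h) * x (g, h) else 0)
          = (\<Sum>x1\<in>UNIV. \<Sum>x2\<in>UNIV. \<Sum>g\<in>UNIV. if qmul x1 x2 = g then f1 (x1, h) * f2 (x2, h) * x (g, h) else 0)" .
    qed
    also have "\<dots> = (\<Sum>h\<in>UNIV. \<Sum>x1\<in>UNIV. \<Sum>x2\<in>UNIV. f1 (x1, h) * f2 (x2, h) * x (qmul x1 x2, h))"
      by simp
    finally show ?thesis .
  qed
  have R: "(\<Sum>p\<in>UNIV. dcomul x p * (f1 (fst p) * f2 (snd p)))
     = (\<Sum>x1\<in>UNIV. \<Sum>h\<in>UNIV. \<Sum>x2\<in>UNIV. f1 (x1, h) * f2 (x2, h) * x (qmul x1 x2, h))"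
  proof -
    have "(\<Sum>p\<in>UNIV. dcomul x p * (f1 (fst p) * f2 (snd p)))
      = (\<Sum>x1\<in>UNIV. \<Sum>h1\<in>UNIV. \<Sum>x2\<in>UNIV. \<Sum>h2\<in>UNIV. if h2 = h1 then f1 (x1, h1) * f2 (x2, h1) * x (qmul x1 x2, h1) else 0)"
      unfolding sum_pair2 sum_pair dcomul_def
      by (intro sum.cong refl) (auto simp: ac_simps)
    also have "\<dots> = (\<Sum>x1\<in>UNIV. \<Sum>h\<in>UNIV. \<Sum>x2\<in>UNIV. f1 (x1, h) * f2 (x2, h) * x (qmul x1 x2, h))"
      by simp
    finally show ?thesis .
  qed
  have "(\<Sum>h\<in>UNIV. \<Sum>x1\<in>UNIV. \<Sum>x2\<in>UNIV. f1 (x1, h) * f2 (x2, h) * x (qmul x1 x2, h))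
      = (\<Sum>x1\<in>UNIV. \<Sum>h\<in>UNIV. \<Sum>x2\<in>UNIV. f1 (x1, h) * f2 (x2, h) * x (qmul x1 x2, h))"
    by (rule sum.swap)
  then show ?thesis using L R by simp
qed

context
  fixes I :: "dd set"
  assumes hopf: "hopf_ideal I"
  and kill: "\<forall>x\<in>I. \<forall>v. \<forall>j\<in>(UNIV :: vb set). dvact UNIV (grmod Vgr VA) x v j = 0"
begin

lemma ann_conv: "ann I f1 \<Longrightarrow> ann I f2 \<Longrightarrow> ann I (conv f1 f2)"
  unfolding ann_def
proof
  fix x assume a1: "\<forall>x\<in>I. pair f1 x = 0" and a2: "\<forall>x\<in>I. pair f2 x = 0" and x: "x \<in> I"
  have sp: "dcomul x \<in> cspan {tensor a b | a b. a \<in> I \<or> b \<in> I}"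
    using hopf x unfolding hopf_ideal_def by blast
  have "(\<Sum>p\<in>UNIV. dcomul x p * (f1 (fst p) * f2 (snd p))) = 0"
  proof (rule bil_span[OF sp])
    fix s assume "s \<in> {tensor a b | a b. a \<in> I \<or> b \<in> I}"
    then obtain a b where s: "s = tensor a b" and ab: "a \<in> I \<or> b \<in> I" by blast
    have "(\<Sum>p\<in>UNIV. s p * (f1 (fst p) * f2 (snd p))) = pair f1 a * pair f2 b"
      unfolding s tensor_def pair_def sum_pair2 sum_product
      by (simp add: ac_simps)
    then show "(\<Sum>p\<in>UNIV. s p * (f1 (fst p) * f2 (snd p))) = 0" using ab a1 a2 by auto
  qed
  then show "pair (conv f1 f2) x = 0" by (simp add: pair_conv)
qed

lemma ann_lin: "ann I f \<Longrightarrow> ann I f' \<Longrightarrow> ann I (\<lambda>p. c * f p + f' p)"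
  unfolding ann_def
proof
  fix x assume a: "\<forall>x\<in>I. pair f x = 0" "\<forall>x\<in>I. pair f' x = 0" and x: "x \<in> I"
  have "pair (\<lambda>p. c * f p + f' p) x = c * pair f x + pair f' x"
    unfolding pair_def by (simp add: sum.distrib sum_distrib_left algebra_simps)
  then show "pair (\<lambda>p. c * f p + f' p) x = 0" using a x by simp
qed

lemma gs_lin: "gs g (\<lambda>h. c * a h + b h) = (\<lambda>p. c * gs g a p + gs g b p)"
  by (auto simp: gs_def)

lemma ann_gs_lin: "ann I (gs g a) \<Longrightarrow> ann I (gs g b) \<Longrightarrow> ann I (gs g (\<lambda>h. c * a h + b h))"
  unfolding gs_lin by (rule ann_lin)

lemma ann_gs_conv: "ann I (gs g1 a) \<Longrightarrow> ann I (gs g2 b) \<Longrightarrow> ann I (gs (qmul g1 g2) (\<lambda>h. a h * b h))"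
  using ann_conv conv_gs by metis

lemma ann_zero: "ann I (gs g (\<lambda>_. 0))"
  by (simp add: ann_def pair_def gs_def case_prod_beta)

lemma ann_alpha: "ann I (gs (Vgr i) (\<lambda>h. VA h i j))"
  unfolding ann_def
proof
  fix x assume x: "x \<in> I"
  have "dvact UNIV (grmod Vgr VA) x (dl i) j = 0" using kill x by blast
  moreover have "dvact UNIV (grmod Vgr VA) x (dl i) j = (\<Sum>p\<in>UNIV. x p * grmod Vgr VA (fst p) (snd p) i j)"
  proof -
    have "dvact UNIV (grmod Vgr VA) x (dl i) j = (\<Sum>ia\<in>UNIV. \<Sum>p\<in>UNIV. dl i ia * x p * grmod Vgr VA (fst p) (snd p) ia j)"
      by (simp add: dvact_def)
    also have "\<dots> = (\<Sum>p\<in>UNIV. \<Sum>ia\<in>UNIV. dl i ia * x p * grmod Vgr VA (fst p) (snd p) ia j)"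
      by (rule sum.swap)
    also have "\<dots> = (\<Sum>p\<in>UNIV. x p * grmod Vgr VA (fst p) (snd p) i j)"
      by (simp add: dl_def)
    finally show ?thesis .
  qed
  moreover have "pair (gs (Vgr i) (\<lambda>h. VA h i j)) x = (\<Sum>p\<in>UNIV. x p * grmod Vgr VA (fst p) (snd p) i j)"
    unfolding pair_def by (intro sum.cong) (auto simp: gs_def grmod_def split: prod.split)
  ultimately show "pair (gs (Vgr i) (\<lambda>h. VA h i j)) x = 0" by simp
qed

lemma ann_row: "ann I (gs (Vgr i) (\<lambda>h. 1 * VA h i U17 + (1 * VA h i V17 + (1 * VA h i U20 + (1 * VA h i V20 + (1 * VA h i U21 + (1 * VA h i V21 + 0)))))))"
  by (intro ann_gs_lin ann_alpha ann_zero)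

lemma Dlem:
  assumes gr: "qmul (Vgr ia) (qmul (Vgr ib) (qmul (Vgr ic) (Vgr ie))) = qe"
  and num: "\<forall>h. cb * ((VA h ia ja * (VA h ib jb * (VA h ic jc * VA h ie je))) * (VA h ia ja * (VA h ib jb * (VA h ic jc * VA h ie je))))
       + (ca * (VA h ia ja * (VA h ib jb * (VA h ic jc * VA h ie je))) + 0) = (if h = h0 then 1 else 0)"
  shows "ann I (gs qe (\<lambda>h. if h = h0 then 1 else 0))"
proof -
  let ?p = "\<lambda>h. VA h ia ja * (VA h ib jb * (VA h ic jc * VA h ie je))"
  have p: "ann I (gs qe ?p)"
    using ann_gs_conv[OF ann_alpha[of ia ja] ann_gs_conv[OF ann_alpha[of ib jb] ann_gs_conv[OF ann_alpha[of ic jc] ann_alpha[of ie je]]]]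
    unfolding gr .
  have pp: "ann I (gs qe (\<lambda>h. ?p h * ?p h))"
    using ann_gs_conv[OF p p] by (simp add: grp_basic)
  have "ann I (gs qe (\<lambda>h. cb * (?p h * ?p h) + (ca * ?p h + 0)))"
    by (intro ann_gs_lin pp p ann_zero)
  moreover have "(\<lambda>h. cb * (?p h * ?p h) + (ca * ?p h + 0)) = (\<lambda>h. if h = h0 then 1 else 0)"
    using num by auto
  ultimately show ?thesis by simp
qed

lemma final_lem:
  assumes D: "ann I (gs qe (\<lambda>h. if h = h0 then 1 else 0))" and F: "ann I (gs g0 f)" and nz: "f h0 \<noteq> 0"
  shows "ann I (gs g0 (\<lambda>h. if h = h0 then 1 else 0))"
proof -
  have "ann I (gs g0 (\<lambda>h. (if h = h0 then 1 else 0) * f h))"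
    using ann_gs_conv[OF D F] by (simp add: grp_basic)
  then have "ann I (gs g0 (\<lambda>h. (1 / f h0) * ((if h = h0 then 1 else 0) * f h) + 0))"
    by (intro ann_gs_lin ann_zero)
  moreover have "(\<lambda>h. (1 / f h0) * ((if h = h0 then 1 else 0) * f h) + 0) = (\<lambda>h. if h = h0 then 1 else 0)"
    using nz by auto
  ultimately show ?thesis by simp
qed

lemma D_0_0: "ann I (gs qe (\<lambda>h. if h = qmk 0 0 then 1 else 0))"
  by (rule Dlem[where ia=U17 and ja=U17 and ib=U17 and jb=U17 and ic=U20 and jc=U20 and ie=U21 and je=U21 and cb="(1)/2" and ca="(1)/2"]) (simp_all add: q8_all q8_unit)

lemma D_0_1: "ann I (gs qe (\<lambda>h. if h = qmk 0 1 then 1 else 0))"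
  by (rule Dlem[where ia=U17 and ja=U17 and ib=U17 and jb=U17 and ic=U20 and jc=V20 and ie=U21 and je=V21 and cb="(1)/2" and ca="(-1)/2"]) (simp_all add: q8_all q8_unit)

lemma D_1_0: "ann I (gs qe (\<lambda>h. if h = qmk 1 0 then 1 else 0))"
  by (rule Dlem[where ia=U17 and ja=V17 and ib=U17 and jb=V17 and ic=U20 and jc=V20 and ie=U21 and je=V21 and cb="(-1)/2" and ca="(-\<i>)/2"]) (simp_all add: q8_all q8_unit)

lemma D_1_1: "ann I (gs qe (\<lambda>h. if h = qmk 1 1 then 1 else 0))"
  by (rule Dlem[where ia=U17 and ja=V17 and ib=U17 and jb=V17 and ic=U20 and jc=U20 and ie=U21 and je=U21 and cb="(-1)/2" and ca="(-\<i>)/2"]) (simp_all add: q8_all q8_unit)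

lemma D_2_0: "ann I (gs qe (\<lambda>h. if h = qmk 2 0 then 1 else 0))"
  by (rule Dlem[where ia=U17 and ja=U17 and ib=U17 and jb=U17 and ic=U20 and jc=U20 and ie=U21 and je=U21 and cb="(1)/2" and ca="(-1)/2"]) (simp_all add: q8_all q8_unit)

lemma D_2_1: "ann I (gs qe (\<lambda>h. if h = qmk 2 1 then 1 else 0))"
  by (rule Dlem[where ia=U17 and ja=U17 and ib=U17 and jb=U17 and ic=U20 and jc=V20 and ie=U21 and je=V21 and cb="(1)/2" and ca="(1)/2"]) (simp_all add: q8_all q8_unit)

lemma D_3_0: "ann I (gs qe (\<lambda>h. if h = qmk 3 0 then 1 else 0))"
  by (rule Dlem[where ia=U17 and ja=V17 and ib=U17 and jb=V17 and ic=U20 and jc=V20 and ie=U21 and je=V21 and cb="(-1)/2" and ca="(\<i>)/2"]) (simp_all add: q8_all q8_unit)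

lemma D_3_1: "ann I (gs qe (\<lambda>h. if h = qmk 3 1 then 1 else 0))"
  by (rule Dlem[where ia=U17 and ja=V17 and ib=U17 and jb=V17 and ic=U20 and jc=U20 and ie=U21 and je=U21 and cb="(-1)/2" and ca="(\<i>)/2"]) (simp_all add: q8_all q8_unit)


lemma rowsum_nz: "(1 * VA h i U17 + (1 * VA h i V17 + (1 * VA h i U20 + (1 * VA h i V20 + (1 * VA h i U21 + (1 * VA h i V21 + 0)))))) \<noteq> 0"
proof -
  have "\<forall>h i. (1 * VA h i U17 + (1 * VA h i V17 + (1 * VA h i U20 + (1 * VA h i V20 + (1 * VA h i U21 + (1 * VA h i V21 + 0)))))) \<noteq> 0"
    unfolding q8_all vb_all by simp
  then show ?thesis by blast
qed

lemma allD: "ann I (gs qe (\<lambda>h. if h = h0 then 1 else 0))"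
proof -
  have "\<forall>h0. ann I (gs qe (\<lambda>h. if h = h0 then 1 else 0))"
    unfolding q8_all using D_0_0 D_1_0 D_2_0 D_3_0 D_0_1 D_1_1 D_2_1 D_3_1 by blast
  then show ?thesis by blast
qed

lemma single: "ann I (gs (Vgr i) (\<lambda>h. if h = h0 then 1 else 0))"
  by (rule final_lem[OF allD ann_row rowsum_nz])

lemma pairg: "ann I (gs (qmul (Vgr i) (Vgr k)) (\<lambda>h. if h = h0 then 1 else 0))"
  by (rule final_lem[OF allD ann_gs_conv[OF ann_row ann_row]]) (use rowsum_nz[of h0 i] rowsum_nz[of h0 k] in simp)

lemma all_delta: "ann I (gs g0 (\<lambda>h. if h = h0 then 1 else 0))"
proof -
  have "\<forall>g0. ann I (gs g0 (\<lambda>h. if h = h0 then 1 else 0))"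
    unfolding q8_all
    using pairg[of U17 V17 h0] pairg[of U17 V20 h0] pairg[of U17 U17 h0] pairg[of U17 U20 h0]
      single[of U17 h0] single[of V17 h0] single[of U20 h0] single[of V20 h0]
    by (simp add: q8_unit)
  then show ?thesis by blast
qed

lemma I_zero: assumes x: "x \<in> I" shows "x = (\<lambda>_. 0)"
proof (rule ext)
  fix p :: "q8 \<times> q8"
  obtain g0 h0 where p: "p = (g0, h0)" by (cases p)
  have "pair (gs g0 (\<lambda>h. if h = h0 then 1 else 0)) x = 0" using all_delta x unfolding ann_def by blast
  moreover have "pair (gs g0 (\<lambda>h. if h = h0 then 1 else 0)) x = x (g0, h0)"
  proof -
    have "pair (gs g0 (\<lambda>h. if h = h0 then 1 else 0)) x = (\<Sum>q\<in>UNIV. if q = (g0, h0) then x q else 0)"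
      unfolding pair_def by (intro sum.cong) (auto simp: gs_def split: if_splits)
    then show ?thesis by simp
  qed
  ultimately show "x p = 0" using p by simp
qed

end

theorem partA: "inner_faithful (UNIV :: vb set) (grmod Vgr VA)"
  unfolding inner_faithful_def
proof
  assume "\<exists>I. hopf_ideal I \<and> I \<noteq> {\<lambda>_. 0} \<and> (\<forall>x\<in>I. \<forall>v. \<forall>j\<in>(UNIV :: vb set). dvact UNIV (grmod Vgr VA) x v j = 0)"
  then obtain I where h: "hopf_ideal I" and ne: "I \<noteq> {\<lambda>_. 0}"
    and k: "\<forall>x\<in>I. \<forall>v. \<forall>j\<in>(UNIV :: vb set). dvact UNIV (grmod Vgr VA) x v j = 0" by blast
  have z: "(\<lambda>_. 0) \<in> I" using h unfolding hopf_ideal_def csubspace_def by blast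
  have "I \<subseteq> {\<lambda>_. 0}" using I_zero[OF h k] by blast
  then have "I = {\<lambda>_. 0}" using z by blast
  then show False using ne by simp
qed


theorem mainTheorem6:
  shows "inner_faithful (UNIV :: vb set) (grmod Vgr VA) \<and>
    (\<forall>(B :: 'b set) act. finite B \<and> is_module B act \<and> simple_module B act \<longrightarrow>
       (\<exists>m\<in>{1..4::nat}. direct_summand B act {bs :: vb list. length bs = m} (grmod tgr tA)))"
  using partA partB by blast

end
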